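(* Assume (C1) and (C2). Then $$\inf_{u\in\mathcal{N}}I(u)=:c_*=\inf_{u\in\mathcal{D},\,u\neq0}\ \max_{t\ge0}I(tu)$$ and $$\inf_{u\in\mathcal{M}}I(u)=:m_*=\inf_{u\in\mathcal{D},\,u^+\neq0,\,u^-\neq0}\ \max_{s,t\ge0}I(su^++tu^-).$$
   Context: Fix real numbers $p,q,r$ with $1<p<q$, $\frac p2$ a positive integer, and $r\ge1$, and functions $a,b,c:\mathbb{Z}\to(0,+\infty)$. Conditions: - (C1) There is $b_0>0$ with $b(n)\ge b_0$ for all $n$ and $b(n)\to+\infty$ as $|n|\to\infty$. - (C2) There is $c_0>0$ with $c(n)\le c_0$ for all $n$ and $\sum_n c(n)<+\infty$. Notation for a real sequence $u=(u(n))_{n\in\mathbb{Z}}$: $\Delta u(n)=u(n+1)-u(n)$, $u^+(n)=\max\{u(n),0\}$, $u^-(n)=\min\{u(n),0\}$. Spaces: - $E$ is the set of real sequences $u$ with $\|u\|:=\big(\sum_n[a(n)|\Delta u(n)|^p+b(n)|u(n)|^p]\big)^{1/p}<\infty$. - $\mathcal{D}=\{u\in E:\sum_n c(n)|u(n)|^q\ln|u(n)|^r<+\infty\}$, where terms with $u(n)=0$ are read as $0$. For $u,v\in\mathcal{D}$: - $I(u)=\frac1p\|u\|^p+\frac{r}{q^2}\sum_n c(n)|u(n)|^q-\frac1q\sum_n c(n)|u(n)|^q\ln|u(n)|^r$. - $\langle I'(u),v\rangle=\sum_n[a(n)|\Delta u(n)|^{p-2}\Delta u(n)\Delta v(n)+b(n)|u(n)|^{p-2}u(n)v(n)]-\sum_n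 c(n)|u(n)|^{q-2}u(n)v(n)\ln|u(n)|^r$. Sets: - $\mathcal{N}=\{u\in\mathcal{D}:u\ne0,\ \langle I'(u),u\rangle=0\}$. - $\mathcal{M}=\{u\in\mathcal{D}:u^+\ne0,\ u^-\neq0,\ \langle I'(u),u^+\rangle=0,\ \langle I'(u),u^-\rangle=0\}$. *)

theory Defs
  imports "HOL-Analysis.Analysis"
begin

definition fdiff :: "(int \<Rightarrow> real) \<Rightarrow> int \<Rightarrow> real" where
  "fdiff u n = u (n + 1) - u n"

definition posp :: "(int \<Rightarrow> real) \<Rightarrow> int \<Rightarrow> real" where
  "posp u n = max (u n) 0"

definition negp :: "(int \<Rightarrow> real) \<Rightarrow> int \<Rightarrow> real" where
  "negp u n = min (u n) 0"

definition scal :: "real \<Rightarrow> (int \<Rightarrow> real) \<Rightarrow> int \<Rightarrow> real" where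
  "scal t u n = t * u n"

definition E_space :: "(int \<Rightarrow> real) \<Rightarrow> (int \<Rightarrow> real) \<Rightarrow> real \<Rightarrow> (int \<Rightarrow> real) set" where
  "E_space a b p = {u. (\<lambda>n. a n * \<bar>fdiff u n\<bar> powr p + b n * \<bar>u n\<bar> powr p) summable_on UNIV}"

definition normE :: "(int \<Rightarrow> real) \<Rightarrow> (int \<Rightarrow> real) \<Rightarrow> real \<Rightarrow> (int \<Rightarrow> real) \<Rightarrow> real" where
  "normE a b p u = (\<Sum>\<^sub>\<infinity> n. a n * \<bar>fdiff u n\<bar> powr p + b n * \<bar>u n\<bar> powr p) powr (1 / p)"

text \<open>Note: in Isabelle ln 0 = 0 and 0 powr x = 0, so terms with u n = 0 are 0.\<close>

definition D_set :: "(int \<Rightarrow> real) \<Rightarrow> (int \<Rightarrow> real) \<Rightarrow> (int \<Rightarrow> real) \<Rightarrow> real \<Rightarrow> real \<Rightarrow> real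
    \<Rightarrow> (int \<Rightarrow> real) set" where
  "D_set a b c p q r = {u \<in> E_space a b p.
      (\<lambda>n. c n * \<bar>u n\<bar> powr q * ln (\<bar>u n\<bar> powr r)) summable_on UNIV}"

definition Ifun :: "(int \<Rightarrow> real) \<Rightarrow> (int \<Rightarrow> real) \<Rightarrow> (int \<Rightarrow> real) \<Rightarrow> real \<Rightarrow> real \<Rightarrow> real
    \<Rightarrow> (int \<Rightarrow> real) \<Rightarrow> real" where
  "Ifun a b c p q r u = (1 / p) * normE a b p u powr p
      + (r / q\<^sup>2) * (\<Sum>\<^sub>\<infinity> n. c n * \<bar>u n\<bar> powr q)
      - (1 / q) * (\<Sum>\<^sub>\<infinity> n. c n * \<bar>u n\<bar> powr q * ln (\<bar>u n\<bar> powr r))"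

definition dIfun :: "(int \<Rightarrow> real) \<Rightarrow> (int \<Rightarrow> real) \<Rightarrow> (int \<Rightarrow> real) \<Rightarrow> real \<Rightarrow> real \<Rightarrow> real
    \<Rightarrow> (int \<Rightarrow> real) \<Rightarrow> (int \<Rightarrow> real) \<Rightarrow> real" where
  "dIfun a b c p q r u v =
     (\<Sum>\<^sub>\<infinity> n. a n * \<bar>fdiff u n\<bar> powr (p - 2) * fdiff u n * fdiff v n
            + b n * \<bar>u n\<bar> powr (p - 2) * u n * v n)
     - (\<Sum>\<^sub>\<infinity> n. c n * \<bar>u n\<bar> powr (q - 2) * u n * v n * ln (\<bar>u n\<bar> powr r))"

definition Nehari :: "(int \<Rightarrow> real) \<Rightarrow> (int \<Rightarrow> real) \<Rightarrow> (int \<Rightarrow> real) \<Rightarrow> real \<Rightarrow> real \<Rightarrow> real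
    \<Rightarrow> (int \<Rightarrow> real) set" where
  "Nehari a b c p q r = {u \<in> D_set a b c p q r. u \<noteq> (\<lambda>_. 0) \<and> dIfun a b c p q r u u = 0}"

definition NodalNehari :: "(int \<Rightarrow> real) \<Rightarrow> (int \<Rightarrow> real) \<Rightarrow> (int \<Rightarrow> real) \<Rightarrow> real \<Rightarrow> real \<Rightarrow> real
    \<Rightarrow> (int \<Rightarrow> real) set" where
  "NodalNehari a b c p q r = {u \<in> D_set a b c p q r. posp u \<noteq> (\<lambda>_. 0) \<and> negp u \<noteq> (\<lambda>_. 0)
      \<and> dIfun a b c p q r u (posp u) = 0 \<and> dIfun a b c p q r u (negp u) = 0}"

end

theory Submission
  imports Defs
begin

lemma tangent_mono_deriv:
  fixes f f' :: "real \<Rightarrow> real"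
  assumes der: "\<And>z. min x y \<le> z \<Longrightarrow> z \<le> max x y \<Longrightarrow> (f has_real_derivative f' z) (at z)"
    and mono: "\<And>z w. min x y \<le> z \<Longrightarrow> z \<le> w \<Longrightarrow> w \<le> max x y \<Longrightarrow> f' z \<le> f' w"
  shows "f y \<ge> f x + f' x * (y - x)"
proof (cases x y rule: linorder_cases)
  case less
  then obtain z where z: "x < z" "z < y" "f y - f x = (y - x) * f' z"
    using MVT2[of x y f f'] der by (auto simp: min_def max_def)
  have "f' x \<le> f' z" using mono[of x z] z less by (auto simp: min_def max_def)
  then have "(y - x) * f' x \<le> (y - x) * f' z" using less by (intro mult_left_mono) auto
  then show ?thesis using z by (simp add: algebra_simps)
next
  case equal then show ?thesis by simp
next
  case greater
  then obtain z where z: "y < z" "z < x" "f x - f y = (x - y) * f' z"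
    using MVT2[of y x f f'] der by (auto simp: min_def max_def)
  have "f' z \<le> f' x" using mono[of z x] z greater by (auto simp: min_def max_def)
  then have "(x - y) * f' z \<le> (x - y) * f' x" using greater by (intro mult_left_mono) auto
  then show ?thesis using z by (simp add: algebra_simps)
qed

lemma tangent_even_pow:
  fixes x y :: real
  assumes "even N" "N \<ge> 2"
  shows "y ^ N \<ge> x ^ N + real N * x ^ (N - 1) * (y - x)"
proof -
  have "odd (N - 1)" using assms by auto
  have "(\<lambda>z. z ^ N) y \<ge> (\<lambda>z. z ^ N) x + (\<lambda>z. real N * z ^ (N - 1)) x * (y - x)"
  proof (rule tangent_mono_deriv)
    fix z :: real show "((\<lambda>z. z ^ N) has_real_derivative real N * z ^ (N - 1)) (at z)"
      by (rule derivative_eq_intros | simp)+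
  next
    fix z w :: real assume "z \<le> w"
    then show "real N * z ^ (N - 1) \<le> real N * w ^ (N - 1)"
      using power_mono_odd[OF \<open>odd (N - 1)\<close>] by (intro mult_left_mono) auto
  qed
  then show ?thesis by simp
qed

lemma tangent_powr:
  fixes m y q :: real
  assumes "m > 0" "y \<ge> 0" "q \<ge> 1"
  shows "y powr q \<ge> m powr q + q * m powr (q - 1) * (y - m)"
proof (cases "y = 0")
  case True
  have "m powr q = m powr (q - 1) * m" using assms(1) by (simp add: powr_diff abs_of_pos)
  moreover have "m powr (q-1) * m * (1 - q) \<le> 0"
    using assms by (intro mult_nonneg_nonpos) auto
  ultimately show ?thesis using True by (simp add: algebra_simps)
next
  case False
  then have yp: "y > 0" using assms by auto
  have "(\<lambda>z. z powr q) y \<ge> (\<lambda>z. z powr q) m + (\<lambda>z. q * z powr (q - 1)) m * (y - m)"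
  proof (rule tangent_mono_deriv)
    fix z :: real assume "min m y \<le> z"
    then have "z > 0" using yp assms by (auto simp: min_def split: if_splits)
    then show "((\<lambda>z. z powr q) has_real_derivative q * z powr (q - 1)) (at z)"
      by (auto intro!: derivative_eq_intros simp: powr_diff)
  next
    fix z w :: real assume "min m y \<le> z" "z \<le> w"
    then have "z > 0" using yp assms by (auto simp: min_def split: if_splits)
    then show "q * z powr (q - 1) \<le> q * w powr (q - 1)"
      using assms \<open>z \<le> w\<close> by (intro mult_left_mono powr_mono2) auto
  qed
  then show ?thesis by simp
qed


lemma psi_nonneg:
  fixes m q :: real
  assumes "m \<ge> 0" "N \<ge> 1" "real N < q"
  shows "(1 / real N) * (1 - m ^ N) - (1 / q) * (1 - m powr q) \<ge> 0"
proof (cases "m = 0")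
  case True
  have z: "(0::real) ^ N = 0" using assms by simp
  have "1 / q \<le> 1 / real N" using assms by (intro divide_left_mono) auto
  then show ?thesis using True assms by (simp add: power_0_left)
next
  case False
  then have mp: "m > 0" using assms by auto
  define y where "y = m ^ N"
  define k where "k = q / real N"
  have yp: "y > 0" using mp by (simp add: y_def)
  have k1: "k \<ge> 1" using assms by (simp add: k_def)
  have Np: "real N > 0" using assms by auto
  have ym: "y powr k = m powr q"
    using mp Np by (simp add: y_def k_def powr_realpow[symmetric] powr_powr)
  have t: "y powr k \<ge> 1 + k * (y - 1)"
    using tangent_powr[of 1 y k] yp k1 by simp
  have q: "q = k * real N" using Np by (simp add: k_def)
  have "(1 / real N) * (1 - y) - (1 / q) * (1 - y powr k) = (1 / q) * (k * (1 - y) - 1 + y powr k)"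
    using Np k1 q by (simp add: field_simps)
  also have "\<dots> \<ge> 0"
  proof -
    have "k * (1 - y) = - (k * (y - 1))" by (simp add: algebra_simps)
    then have "k * (1 - y) - 1 + y powr k \<ge> 0" using t by linarith
    then show ?thesis using assms by (intro mult_nonneg_nonneg) auto
  qed
  finally show ?thesis using ym by (simp add: y_def)
qed

lemma phi_nonneg:
  fixes s q :: real
  assumes "s \<ge> 0" "q > 0"
  shows "1 - s powr q + q * s powr q * ln s \<ge> 0"
proof (cases "s = 0")
  case True then show ?thesis by simp
next
  case False
  then have sp: "s > 0" using assms by auto
  define y where "y = s powr q"
  have yp: "y > 0" using sp by (simp add: y_def)
  have ly: "ln y = q * ln s" using sp by (simp add: y_def ln_powr)
  have "ln (1 / y) \<le> 1 / y - 1" using yp by (intro ln_le_minus_one) auto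
  then have "- ln y \<le> 1 / y - 1" using yp by (simp add: ln_div)
  then have "y * (- ln y) \<le> y * (1 / y - 1)" using yp by (intro mult_left_mono) auto
  moreover have "y * (1 / y - 1) = 1 - y" using yp by (simp add: field_simps)
  ultimately have "- y * ln y \<le> 1 - y" by simp
  then show ?thesis using ly by (simp add: y_def algebra_simps)
qed

lemma convex_powr2:
  fixes s t x y q :: real
  assumes "s \<ge> 0" "t \<ge> 0" "x \<ge> 0" "y \<ge> 0" "x + y > 0" "q \<ge> 1"
  shows "x * s powr q + y * t powr q \<ge> (x + y) * ((s * x + t * y) / (x + y)) powr q"
proof -
  define m where "m = (s * x + t * y) / (x + y)"
  have m0: "m \<ge> 0" using assms by (simp add: m_def)
  show ?thesis
  proof (cases "m = 0")
    case True then show ?thesis using assms by (simp add: m_def[symmetric])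
  next
    case False
    then have mp: "m > 0" using m0 by auto
    have ts: "s powr q \<ge> m powr q + q * m powr (q - 1) * (s - m)"
      using tangent_powr[OF mp assms(1) assms(6)] .
    have tt: "t powr q \<ge> m powr q + q * m powr (q - 1) * (t - m)"
      using tangent_powr[OF mp assms(2) assms(6)] .
    have "x * s powr q + y * t powr q \<ge> x * (m powr q + q * m powr (q - 1) * (s - m)) + y * (m powr q + q * m powr (q - 1) * (t - m))"
      using ts tt assms by (intro add_mono mult_left_mono) auto
    moreover have "x * (m powr q + q * m powr (q - 1) * (s - m)) + y * (m powr q + q * m powr (q - 1) * (t - m))
        = (x + y) * m powr q + q * m powr (q - 1) * (s * x + t * y - (x + y) * m)"
      by (simp add: algebra_simps)
    moreover have "s * x + t * y - (x + y) * m = 0" using assms by (simp add: m_def)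
    ultimately show ?thesis by (simp add: m_def)
  qed
qed

lemma cross_pos:
  fixes x y s t q :: real
  assumes N: "even N" "N \<ge> 2" and q: "real N < q" and st: "s \<ge> 0" "t \<ge> 0" and xy: "x \<ge> 0" "y \<ge> 0"
  shows "(1 / real N) * ((x + y) ^ N - (s * x + t * y) ^ N)
      - (1 / q) * (1 - s powr q) * ((x + y) ^ (N - 1) * x)
      - (1 / q) * (1 - t powr q) * ((x + y) ^ (N - 1) * y) \<ge> 0"
proof (cases "x + y = 0")
  case True
  then have "x = 0" "y = 0" using xy by auto
  then show ?thesis using N by simp
next
  case False
  define S where "S = x + y"
  have Sp: "S > 0" using False xy by (simp add: S_def)
  define m where "m = (s * x + t * y) / S"
  have m0: "m \<ge> 0" using st xy Sp by (simp add: m_def)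
  have q1: "q \<ge> 1" using q N by simp
  have conv: "x * s powr q + y * t powr q \<ge> S * m powr q"
    using convex_powr2[OF st xy _ q1] Sp by (simp add: S_def m_def)
  have sxty: "s * x + t * y = S * m" using Sp by (simp add: m_def)
  have SN: "S ^ N = S ^ (N - 1) * S" using N by (simp add: power_eq_if)
  have "(1 / real N) * ((x + y) ^ N - (s * x + t * y) ^ N)
      - (1 / q) * (1 - s powr q) * ((x + y) ^ (N - 1) * x)
      - (1 / q) * (1 - t powr q) * ((x + y) ^ (N - 1) * y)
      = (1 / real N) * (S ^ N - S ^ N * m ^ N) - (1 / q) * S ^ (N - 1) * (S - (x * s powr q + y * t powr q))"
    by (simp add: S_def[symmetric] sxty power_mult_distrib algebra_simps) (simp add: S_def field_simps add_divide_distrib)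
  also have "\<dots> \<ge> (1 / real N) * (S ^ N - S ^ N * m ^ N) - (1 / q) * S ^ (N - 1) * (S - S * m powr q)"
    using conv Sp q N by (intro diff_left_mono mult_left_mono) auto
  also have "(1 / real N) * (S ^ N - S ^ N * m ^ N) - (1 / q) * S ^ (N - 1) * (S - S * m powr q)
      = S ^ N * ((1 / real N) * (1 - m ^ N) - (1 / q) * (1 - m powr q))"
    unfolding SN by (simp add: algebra_simps diff_divide_distrib)
  also have "\<dots> \<ge> 0" using psi_nonneg[OF m0 _ q] N Sp by simp
  finally show ?thesis .
qed

lemma cross_gen:
  fixes x y s t q :: real
  assumes N: "even N" "N \<ge> 2" and q: "real N < q" and st: "s \<ge> 0" "t \<ge> 0" and xy: "x * y \<ge> 0"
  shows "(1 / real N) * ((x + y) ^ N - (s * x + t * y) ^ N)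
      - (1 / q) * (1 - s powr q) * ((x + y) ^ (N - 1) * x)
      - (1 / q) * (1 - t powr q) * ((x + y) ^ (N - 1) * y) \<ge> 0"
proof (cases "x \<ge> 0 \<and> y \<ge> 0")
  case True then show ?thesis using cross_pos[OF N q st] by auto
next
  case False
  then have "-x \<ge> 0" "-y \<ge> 0" using xy
    by (auto simp: zero_le_mult_iff)
  from cross_pos[OF N q st this] have
    "(1 / real N) * ((-x + -y) ^ N - (s * -x + t * -y) ^ N)
      - (1 / q) * (1 - s powr q) * ((-x + -y) ^ (N - 1) * -x)
      - (1 / q) * (1 - t powr q) * ((-x + -y) ^ (N - 1) * -y) \<ge> 0" .
  moreover have "(-x + -y) ^ N = (x + y) ^ N" "(s * -x + t * -y) ^ N = (s * x + t * y) ^ N"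
  proof -
    have e1: "-x + -y = -(x + y)" "s * -x + t * -y = -(s * x + t * y)" by simp_all
    show "(-x + -y) ^ N = (x + y) ^ N" "(s * -x + t * -y) ^ N = (s * x + t * y) ^ N"
      unfolding e1 by (rule power_minus_even[OF N(1)])+
  qed
  moreover have "(-x + -y) ^ (N - 1) = - ((x + y) ^ (N - 1))"
  proof -
    have "odd (N - 1)" using N by auto
    have e1: "-x + -y = -(x + y)" by simp
    show ?thesis unfolding e1 using power_minus_odd[OF \<open>odd (N - 1)\<close>] by blast
  qed
  ultimately show ?thesis by simp
qed

lemma pow_le_powr_ge1:
  fixes s q :: real
  assumes "s \<ge> 1" "real N \<le> q"
  shows "s ^ N \<le> s powr q"
proof -
  have "s ^ N = s powr real N" using assms by (simp add: powr_realpow)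
  also have "\<dots> \<le> s powr q" using assms by (intro powr_mono) auto
  finally show ?thesis .
qed

lemma Phi_large:
  fixes X Y Z q K :: real
  assumes Z: "Z > 0" and q: "real N \<le> q"
  shows "\<exists>R\<ge>1. \<forall>s\<ge>R. X * s ^ N + Y * s powr q - Z * s powr q * ln s < - K"
proof -
  define R where "R = exp ((\<bar>X\<bar> + \<bar>Y\<bar> + \<bar>K\<bar> + 1) / Z)"
  have R1: "R \<ge> 1" using Z by (simp add: R_def)
  have "X * s ^ N + Y * s powr q - Z * s powr q * ln s < - K" if s: "s \<ge> R" for s
  proof -
    have s1: "s \<ge> 1" using s R1 by simp
    have "ln s \<ge> ln R" using s R1 by simp
    then have ls: "Z * ln s \<ge> \<bar>X\<bar> + \<bar>Y\<bar> + \<bar>K\<bar> + 1" using Z by (simp add: R_def field_simps)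
    have sq1: "s powr q \<ge> 1" using s1 q by (simp add: ge_one_powr_ge_zero)
    have sN: "s ^ N \<le> s powr q" using pow_le_powr_ge1[OF s1 q] .
    have "X * s ^ N \<le> \<bar>X\<bar> * s powr q"
    proof -
      have "X * s ^ N \<le> \<bar>X\<bar> * s ^ N" using s1 by (intro mult_right_mono) auto
      also have "\<dots> \<le> \<bar>X\<bar> * s powr q" using sN by (intro mult_left_mono) auto
      finally show ?thesis .
    qed
    moreover have "Y * s powr q \<le> \<bar>Y\<bar> * s powr q" using sq1 by (intro mult_right_mono) auto
    moreover have "Z * s powr q * ln s = s powr q * (Z * ln s)" by simp
    moreover have "s powr q * (Z * ln s) \<ge> s powr q * (\<bar>X\<bar> + \<bar>Y\<bar> + \<bar>K\<bar> + 1)"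
      using ls sq1 by (intro mult_left_mono) auto
    moreover have "s powr q * (\<bar>X\<bar> + \<bar>Y\<bar> + \<bar>K\<bar> + 1) = \<bar>X\<bar> * s powr q + \<bar>Y\<bar> * s powr q + s powr q * (\<bar>K\<bar> + 1)"
      by (simp add: algebra_simps)
    moreover have "s powr q * (\<bar>K\<bar> + 1) \<ge> \<bar>K\<bar> + 1"
      using mult_left_mono[OF sq1, of "\<bar>K\<bar> + 1"] by (simp add: mult.commute)
    ultimately show ?thesis by linarith
  qed
  then show ?thesis using R1 by blast
qed

lemma Phi_small:
  fixes X Y Z q :: real
  assumes X: "X > 0" and Z: "Z > 0" and q: "real N < q"
  shows "\<exists>e>0. e \<le> 1 \<and> X * e ^ N + Y * e powr q - Z * e powr q * ln e > 0"
proof -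
  define d where "d = q - real N"
  have d: "d > 0" using q by (simp add: d_def)
  define \<delta> where "\<delta> = X / (\<bar>Y\<bar> + 1)"
  have \<delta>: "\<delta> > 0" using X by (simp add: \<delta>_def)
  define e where "e = min (1/2) (\<delta> powr (1 / d))"
  have e0: "e > 0" using \<delta> by (simp add: e_def)
  have e1: "e \<le> 1" by (simp add: e_def)
  have ed: "e powr d \<le> \<delta>"
  proof -
    have "e powr d \<le> (\<delta> powr (1 / d)) powr d" using e0 d by (intro powr_mono2) (auto simp: e_def)
    also have "\<dots> = \<delta>" using d \<delta> by (simp add: powr_powr)
    finally show ?thesis .
  qed
  have eq: "e powr q = e ^ N * e powr d"
    using e0 by (simp add: d_def powr_realpow[symmetric] powr_add[symmetric])
  have lne: "ln e \<le> 0" using e0 e1 by simp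
  have "Z * e powr q * ln e \<le> 0" using Z lne by (simp add: mult_nonneg_nonpos)
  moreover have "Y * e powr q \<ge> - (\<bar>Y\<bar> * e powr q)"
    by (metis abs_ge_self abs_minus_cancel abs_mult abs_of_nonneg minus_le_iff powr_ge_zero)
  moreover have "\<bar>Y\<bar> * e powr d < X"
  proof -
    have "\<bar>Y\<bar> * e powr d \<le> \<bar>Y\<bar> * \<delta>" using ed by (intro mult_left_mono) auto
    also have "\<dots> < X" using X by (simp add: \<delta>_def field_simps)
    finally show ?thesis .
  qed
  then have "e ^ N * (\<bar>Y\<bar> * e powr d) < e ^ N * X" using e0 by (intro mult_strict_left_mono) auto
  ultimately have "X * e ^ N + Y * e powr q - Z * e powr q * ln e > 0"
    unfolding eq by (simp add: algebra_simps)
  then show ?thesis using e0 e1 by blast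
qed

lemma Phi_bounded:
  fixes X Y Z q :: real
  assumes Z: "Z > 0" and q: "real N < q" and N: "N \<ge> 1"
  shows "\<exists>M. \<forall>s\<ge>0. X * s ^ N + Y * s powr q - Z * s powr q * ln s \<le> M"
proof -
  obtain R where R: "R \<ge> 1" "\<And>s. s \<ge> R \<Longrightarrow> X * s ^ N + Y * s powr q - Z * s powr q * ln s < - 0"
    using Phi_large[OF Z less_imp_le[OF q], where K=0 and X=X and Y=Y] by auto
  define M where "M = \<bar>X\<bar> + \<bar>Y\<bar> + Z / q + (\<bar>X\<bar> + \<bar>Y\<bar>) * R powr q"
  have q0: "q > 0" using q N by simp
  have M0: "(\<bar>X\<bar> + \<bar>Y\<bar>) * R powr q \<ge> 0" "Z / q \<ge> 0" using Z q0 by auto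
  have "X * s ^ N + Y * s powr q - Z * s powr q * ln s \<le> M" if s: "s \<ge> 0" for s
  proof (cases "s \<le> 1")
    case True
    have sN: "s ^ N \<le> 1" using s True by (simp add: power_le_one)
    have sq: "s powr q \<le> 1" using s True q0 by (intro powr_le1) auto
    have "X * s ^ N \<le> \<bar>X\<bar>"
      using sN s by (metis abs_ge_self abs_mult abs_of_nonneg mult_left_le mult_right_mono order.trans abs_ge_zero zero_le_power)
    moreover have "Y * s powr q \<le> \<bar>Y\<bar>"
      using sq s by (metis abs_ge_self abs_mult abs_of_nonneg mult_left_le mult_right_mono order.trans abs_ge_zero powr_ge_zero)
    moreover have "- (Z * s powr q * ln s) \<le> Z / q"
    proof -
      have "1 - s powr q + q * s powr q * ln s \<ge> 0" using phi_nonneg[OF s q0] .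
      then have "q * (- (s powr q * ln s)) \<le> 1 - s powr q" by (simp add: algebra_simps)
      then have "q * (- (s powr q * ln s)) \<le> 1" using powr_ge_zero[of s q] by linarith
      then have "- (s powr q * ln s) \<le> 1 / q" using q0 by (simp add: field_simps)
      then have "Z * (- (s powr q * ln s)) \<le> Z * (1 / q)" using Z by (intro mult_left_mono) auto
      then show ?thesis by simp
    qed
    ultimately show ?thesis using M0 unfolding M_def by linarith
  next
    case False
    show ?thesis
    proof (cases "s \<ge> R")
      case True then show ?thesis using R(2)[OF True] M0 abs_ge_zero[of X] abs_ge_zero[of Y] unfolding M_def by linarith
    next
      case F2: False
      have s1: "s \<ge> 1" using False by simp
      have sN: "s ^ N \<le> s powr q" using pow_le_powr_ge1[OF s1] q by simp
      have sR: "s powr q \<le> R powr q" using F2 s q0 by (intro powr_mono2) auto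
      have "Z * s powr q * ln s \<ge> 0" using Z s1 by simp
      moreover have "X * s ^ N \<le> \<bar>X\<bar> * R powr q"
      proof -
        have "X * s ^ N \<le> \<bar>X\<bar> * s ^ N" using s by (intro mult_right_mono) auto
        also have "\<dots> \<le> \<bar>X\<bar> * R powr q" using sN sR by (intro mult_left_mono) auto
        finally show ?thesis .
      qed
      moreover have "Y * s powr q \<le> \<bar>Y\<bar> * R powr q"
      proof -
        have "Y * s powr q \<le> \<bar>Y\<bar> * s powr q" by (intro mult_right_mono) auto
        also have "\<dots> \<le> \<bar>Y\<bar> * R powr q" using sR by (intro mult_left_mono) auto
        finally show ?thesis .
      qed
      ultimately show ?thesis using M0 unfolding M_def by (simp add: algebra_simps)
    qed
  qed
  then show ?thesis by blast
qed

lemma infsum_comb2: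
  fixes f1 f2 :: "'a \<Rightarrow> real"
  assumes "f1 summable_on S" "f2 summable_on S" "\<And>x. g x = k1 * f1 x + k2 * f2 x"
  shows "g summable_on S" "infsum g S = k1 * infsum f1 S + k2 * infsum f2 S"
proof -
  have h: "((\<lambda>x. k1 * f1 x + k2 * f2 x) has_sum (k1 * infsum f1 S + k2 * infsum f2 S)) S"
    using assms by (intro has_sum_add has_sum_cmult_right) auto
  have "g = (\<lambda>x. k1 * f1 x + k2 * f2 x)" using assms(3) by auto
  then show "g summable_on S" "infsum g S = k1 * infsum f1 S + k2 * infsum f2 S"
    using h has_sum_imp_summable infsumI by auto
qed

lemma infsum_comb3:
  fixes f1 f2 f3 :: "'a \<Rightarrow> real"
  assumes "f1 summable_on S" "f2 summable_on S" "f3 summable_on S"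
    "\<And>x. g x = k1 * f1 x + k2 * f2 x + k3 * f3 x"
  shows "g summable_on S" "infsum g S = k1 * infsum f1 S + k2 * infsum f2 S + k3 * infsum f3 S"
proof -
  have h: "((\<lambda>x. k1 * f1 x + k2 * f2 x + k3 * f3 x) has_sum (k1 * infsum f1 S + k2 * infsum f2 S + k3 * infsum f3 S)) S"
    using assms by (intro has_sum_add has_sum_cmult_right) auto
  have "g = (\<lambda>x. k1 * f1 x + k2 * f2 x + k3 * f3 x)" using assms(4) by auto
  then show "g summable_on S" "infsum g S = k1 * infsum f1 S + k2 * infsum f2 S + k3 * infsum f3 S"
    using h has_sum_imp_summable infsumI by auto
qed

lemma infsum_comb4:
  fixes f1 f2 f3 f4 :: "'a \<Rightarrow> real"
  assumes "f1 summable_on S" "f2 summable_on S" "f3 summable_on S" "f4 summable_on S"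
    "\<And>x. g x = k1 * f1 x + k2 * f2 x + k3 * f3 x + k4 * f4 x"
  shows "g summable_on S" "infsum g S = k1 * infsum f1 S + k2 * infsum f2 S + k3 * infsum f3 S + k4 * infsum f4 S"
proof -
  have h: "((\<lambda>x. k1 * f1 x + k2 * f2 x + k3 * f3 x + k4 * f4 x) has_sum (k1 * infsum f1 S + k2 * infsum f2 S + k3 * infsum f3 S + k4 * infsum f4 S)) S"
    using assms by (intro has_sum_add has_sum_cmult_right) auto
  have "g = (\<lambda>x. k1 * f1 x + k2 * f2 x + k3 * f3 x + k4 * f4 x)" using assms(5) by auto
  then show "g summable_on S" "infsum g S = k1 * infsum f1 S + k2 * infsum f2 S + k3 * infsum f3 S + k4 * infsum f4 S"
    using h has_sum_imp_summable infsumI by auto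
qed

lemma summable_dom:
  fixes f g :: "'a \<Rightarrow> real"
  assumes "f summable_on S" "\<And>x. \<bar>g x\<bar> \<le> C * f x"
  shows "g summable_on S"
proof -
  have "(\<lambda>x. C * f x) summable_on S" using assms(1) by (rule summable_on_cmult_right)
  then have "(\<lambda>x. norm (g x)) summable_on S"
    by (rule summable_on_comparison_test) (use assms(2) in auto)
  then show ?thesis using summable_on_iff_abs_summable_on_real[of g S] by simp
qed

lemma summable_on_sum_fin:
  fixes f :: "'i \<Rightarrow> 'a \<Rightarrow> real"
  assumes "finite K" "\<And>k. k \<in> K \<Longrightarrow> f k summable_on S"
  shows "(\<lambda>x. \<Sum>k\<in>K. f k x) summable_on S \<and> infsum (\<lambda>x. \<Sum>k\<in>K. f k x) S = (\<Sum>k\<in>K. infsum (f k) S)"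
  using assms
proof (induction K rule: finite_induct)
  case empty then show ?case by simp
next
  case (insert k K)
  then have s1: "f k summable_on S" and s2: "(\<lambda>x. \<Sum>k\<in>K. f k x) summable_on S"
    and e2: "infsum (\<lambda>x. \<Sum>k\<in>K. f k x) S = (\<Sum>k\<in>K. infsum (f k) S)" by auto
  have eq: "(\<lambda>x. \<Sum>k\<in>insert k K. f k x) = (\<lambda>x. f k x + (\<Sum>k\<in>K. f k x))"
    using insert by auto
  show ?case unfolding eq using insert s1 s2 e2
    by (simp add: summable_on_add infsum_add)
qed

lemma posp_negp_sum: "posp u n + negp u n = u n"
  by (simp add: posp_def negp_def max_def min_def)

lemma posp_ge0: "posp u n \<ge> 0" and negp_le0: "negp u n \<le> 0"
  by (simp_all add: posp_def negp_def)

lemma abs_posp_le: "\<bar>posp u n\<bar> \<le> \<bar>u n\<bar>" and abs_negp_le: "\<bar>negp u n\<bar> \<le> \<bar>u n\<bar>"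
  by (simp_all add: posp_def negp_def max_def min_def)

lemma pos_cases:
  "(u n > 0 \<and> posp u n = u n \<and> negp u n = 0) \<or> (u n \<le> 0 \<and> posp u n = 0 \<and> negp u n = u n)"
  by (auto simp: posp_def negp_def max_def min_def)

definition al :: "(int \<Rightarrow> real) \<Rightarrow> int \<Rightarrow> real" where "al u n = fdiff (posp u) n"
definition be :: "(int \<Rightarrow> real) \<Rightarrow> int \<Rightarrow> real" where "be u n = fdiff (negp u) n"
definition W :: "(int \<Rightarrow> real) \<Rightarrow> real \<Rightarrow> real \<Rightarrow> int \<Rightarrow> real" where
  "W u s t = (\<lambda>n. s * posp u n + t * negp u n)"

lemma al_be_sum: "al u n + be u n = fdiff u n"
proof -
  have "al u n + be u n = (posp u (n+1) + negp u (n+1)) - (posp u n + negp u n)"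
    by (simp add: al_def be_def fdiff_def algebra_simps)
  then show ?thesis by (simp only: posp_negp_sum fdiff_def)
qed

lemma al_be_sign: "al u n * be u n \<ge> 0"
proof -
  consider "u n > 0" "u (n+1) > 0" | "u n > 0" "u (n+1) \<le> 0" | "u n \<le> 0" "u (n+1) > 0" | "u n \<le> 0" "u (n+1) \<le> 0"
    by linarith
  then show ?thesis
  proof cases
    case 1 then show ?thesis by (simp add: al_def be_def fdiff_def posp_def negp_def)
  next
    case 2 then show ?thesis by (simp add: al_def be_def fdiff_def posp_def negp_def mult_pos_neg mult_nonneg_nonpos)
  next
    case 3 then show ?thesis using mult_nonneg_nonpos[of "u (n+1)" "u n"] by (simp add: al_def be_def fdiff_def posp_def negp_def)
  next
    case 4 then show ?thesis by (simp add: al_def be_def fdiff_def posp_def negp_def)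
  qed
qed

lemma al_be_sign': "(al u n \<ge> 0 \<and> be u n \<ge> 0) \<or> (al u n \<le> 0 \<and> be u n \<le> 0)"
  using al_be_sign[of u n] by (auto simp: zero_le_mult_iff)

lemma abs_al_le: "\<bar>al u n\<bar> \<le> \<bar>fdiff u n\<bar>" and abs_be_le: "\<bar>be u n\<bar> \<le> \<bar>fdiff u n\<bar>"
  using al_be_sign'[of u n] al_be_sum[of u n] by auto

lemma fdiff_W: "fdiff (W u s t) n = s * al u n + t * be u n"
  by (simp add: W_def fdiff_def al_def be_def algebra_simps)

lemma W_pt: "W u s t n = (if u n > 0 then s * u n else t * u n)"
  using pos_cases[of u n] by (auto simp: W_def)

lemma posp_W: assumes "s \<ge> 0" "t \<ge> 0" shows "posp (W u s t) = (\<lambda>n. s * posp u n)"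
proof
  fix n show "posp (W u s t) n = s * posp u n"
  proof (cases "u n > 0")
    case True then show ?thesis using assms by (simp add: posp_def W_pt)
  next
    case False
    then have "t * u n \<le> 0" using assms by (simp add: mult_nonneg_nonpos)
    then show ?thesis using False by (simp add: posp_def W_pt)
  qed
qed

lemma negp_W: assumes "s \<ge> 0" "t \<ge> 0" shows "negp (W u s t) = (\<lambda>n. t * negp u n)"
proof
  fix n show "negp (W u s t) n = t * negp u n"
  proof (cases "u n > 0")
    case True then show ?thesis using assms by (simp add: negp_def W_pt)
  next
    case False
    then have "t * u n \<le> 0" using assms by (simp add: mult_nonneg_nonpos)
    then show ?thesis using False by (simp add: negp_def W_pt)
  qed
qed

lemma W11: "W u 1 1 = u"
  by (rule ext) (simp add: W_def posp_negp_sum)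

lemma scal_W: "scal s u = W u s s"
proof
  fix n
  have "W u s s n = s * (posp u n + negp u n)" by (simp add: W_def algebra_simps)
  then show "scal s u n = W u s s n" by (simp only: posp_negp_sum scal_def)
qed

lemma W_W: "s \<ge> 0 \<Longrightarrow> t \<ge> 0 \<Longrightarrow> W (W u s t) s' t' = W u (s' * s) (t' * t)"
  unfolding W_def[of "W u s t" s' t'] by (simp add: posp_W negp_W W_def[of u "s' * s"] mult.assoc)

locale setting =
  fixes p q r :: real and a b c :: "int \<Rightarrow> real" and N :: nat
  assumes pN: "p = real N" and Neven: "even N" and N2: "2 \<le> N" and pq: "p < q" and rpos: "0 < r"
    and apos: "\<And>n. a n > 0" and bpos: "\<And>n. b n > 0" and cpos: "\<And>n. c n > 0"
    and b0ex: "\<exists>b0>0. \<forall>n. b n \<ge> b0" and csum: "c summable_on UNIV"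
begin

abbreviation "D \<equiv> D_set a b c p q r"
abbreviation "I \<equiv> Ifun a b c p q r"
abbreviation "dI \<equiv> dIfun a b c p q r"

lemma p_pos: "p > 0" and q_pos: "q > 0" and Nq: "real N < q" and N1: "N \<ge> 1" and q1: "q \<ge> 1"
  using pN N2 pq by auto

lemma absN: "\<bar>x\<bar> powr p = x ^ N"
proof (cases "x = 0")
  case True then show ?thesis using N2 by simp
next
  case False
  then have "\<bar>x\<bar> powr p = \<bar>x\<bar> ^ N" by (simp add: pN powr_realpow)
  also have "\<dots> = x ^ N" using Neven by (simp add: power_even_abs)
  finally show ?thesis .
qed

lemma pw2: "\<bar>x\<bar> powr (p - 2) * x * y = x ^ (N - 1) * y"
proof (cases "x = 0")
  case True then show ?thesis using N2 by simp
next
  case False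
  have e: "p - 2 = real (N - 2)" using N2 pN by simp
  have "\<bar>x\<bar> powr (p - 2) = \<bar>x\<bar> ^ (N - 2)" using False by (simp add: e powr_realpow)
  also have "\<dots> = x ^ (N - 2)" using Neven by (simp add: power_even_abs)
  finally have "\<bar>x\<bar> powr (p - 2) * x = x ^ (N - 1)"
    using N2 by (simp add: power_Suc2[symmetric] Suc_diff_Suc numeral_2_eq_2)
  then show ?thesis by simp
qed

lemma q2: "\<bar>x\<bar> powr (q - 2) * x * x = \<bar>x\<bar> powr q"
proof (cases "x = 0")
  case True then show ?thesis using q_pos by simp
next
  case False
  have "\<bar>x\<bar> powr (q - 2) * x * x = \<bar>x\<bar> powr (q - 2) * \<bar>x\<bar> powr 2"
  proof -
    have "\<bar>x\<bar> powr 2 = \<bar>x\<bar> ^ 2" using False by (simp add: powr_numeral)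
    also have "\<dots> = x * x" by (simp add: power2_eq_square)
    finally show ?thesis by (simp add: mult.assoc)
  qed
  also have "\<dots> = \<bar>x\<bar> powr (q - 2 + 2)" by (rule powr_add[symmetric])
  also have "\<dots> = \<bar>x\<bar> powr q" by simp
  finally show ?thesis .
qed

lemma lnW0: "s \<ge> 0 \<Longrightarrow> \<bar>s * x\<bar> powr q * ln (\<bar>s * x\<bar> powr r)
   = s powr q * (\<bar>x\<bar> powr q * ln (\<bar>x\<bar> powr r)) + s powr q * (r * ln s) * \<bar>x\<bar> powr q"
proof (cases "s = 0 \<or> x = 0")
  case True then show ?thesis by auto
next
  case False
  assume s0: "s \<ge> 0"
  then have sp: "s > 0" and xn: "\<bar>x\<bar> > 0" using False by auto
  have "\<bar>s * x\<bar> = s * \<bar>x\<bar>" using sp by (simp add: abs_mult)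
  moreover have "ln ((s * \<bar>x\<bar>) powr r) = r * ln s + ln (\<bar>x\<bar> powr r)"
    using sp xn by (simp add: ln_powr ln_mult algebra_simps)
  moreover have "(s * \<bar>x\<bar>) powr q = s powr q * \<bar>x\<bar> powr q" using sp xn by (simp add: powr_mult)
  ultimately show ?thesis by (simp add: algebra_simps)
qed

lemma E_iff: "u \<in> E_space a b p \<longleftrightarrow> (\<lambda>n. a n * (fdiff u n) ^ N + b n * (u n) ^ N) summable_on UNIV"
  by (simp add: E_space_def absN)

lemma E_parts:
  assumes "u \<in> E_space a b p"
  shows "(\<lambda>n. a n * (fdiff u n) ^ N) summable_on UNIV" "(\<lambda>n. b n * (u n) ^ N) summable_on UNIV"
proof -
  have s: "(\<lambda>n. a n * (fdiff u n) ^ N + b n * (u n) ^ N) summable_on UNIV" using assms E_iff by auto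
  have nn: "0 \<le> a n * (fdiff u n) ^ N" "0 \<le> b n * (u n) ^ N" for n
    using apos[of n] bpos[of n] Neven by (auto intro!: mult_nonneg_nonneg zero_le_even_power)
  show "(\<lambda>n. a n * (fdiff u n) ^ N) summable_on UNIV"
    by (rule summable_on_comparison_test[OF s]) (use nn in auto)
  show "(\<lambda>n. b n * (u n) ^ N) summable_on UNIV"
    by (rule summable_on_comparison_test[OF s]) (use nn in auto)
qed

lemma E_bounded:
  assumes "u \<in> E_space a b p"
  shows "\<exists>M\<ge>1. \<forall>n. \<bar>u n\<bar> \<le> M"
proof -
  obtain b0 where b0: "b0 > 0" "\<And>n. b n \<ge> b0" using b0ex by auto
  have s: "(\<lambda>n. b n * (u n) ^ N) summable_on UNIV" using E_parts[OF assms] by simp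
  define S where "S = infsum (\<lambda>n. b n * (u n) ^ N) UNIV"
  have nn: "0 \<le> b n * (u n) ^ N" for n using bpos[of n] Neven by (auto intro!: mult_nonneg_nonneg zero_le_even_power)
  have le: "b n * (u n) ^ N \<le> S" for n
    using finite_sum_le_infsum[OF s, of "{n}"] nn unfolding S_def by auto
  define M where "M = max 1 (S / b0)"
  have "\<bar>u n\<bar> \<le> M" for n
  proof (cases "\<bar>u n\<bar> \<le> 1")
    case True then show ?thesis by (simp add: M_def)
  next
    case False
    have "\<bar>u n\<bar> = \<bar>u n\<bar> ^ 1" by simp
    also have "\<dots> \<le> \<bar>u n\<bar> ^ N" using False N1 by (intro power_increasing) auto
    also have "\<dots> = (u n) ^ N" using Neven by (simp add: power_even_abs)
    finally have "\<bar>u n\<bar> \<le> (u n) ^ N" .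
    moreover have "b0 * (u n) ^ N \<le> b n * (u n) ^ N"
      using b0(2)[of n] Neven by (intro mult_right_mono) (auto intro: zero_le_even_power)
    ultimately have "b0 * \<bar>u n\<bar> \<le> S" using le[of n] b0(1)
      by (meson mult_left_mono less_imp_le order_trans)
    then have "\<bar>u n\<bar> \<le> S / b0" using b0(1) by (simp add: field_simps)
    then show ?thesis by (simp add: M_def)
  qed
  then show ?thesis unfolding M_def using max.cobounded1 by blast
qed

lemma c_sum_dom:
  assumes "u \<in> E_space a b p" "\<And>n. \<bar>v n\<bar> \<le> \<bar>u n\<bar>"
  shows "(\<lambda>n. c n * \<bar>v n\<bar> powr q) summable_on UNIV"
proof -
  obtain M where M: "M \<ge> 1" "\<And>n. \<bar>u n\<bar> \<le> M" using E_bounded[OF assms(1)] by auto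
  show ?thesis
  proof (rule summable_dom[OF csum])
    fix n
    have "\<bar>v n\<bar> powr q \<le> M powr q" using assms(2)[of n] M(2)[of n] q_pos
      by (intro powr_mono2) auto
    then show "\<bar>c n * \<bar>v n\<bar> powr q\<bar> \<le> M powr q * c n"
      using cpos[of n] by (simp add: abs_mult mult.commute mult_left_mono)
  qed
qed

end

lemma lin_bound: "\<bar>x::real\<bar> \<le> \<bar>z\<bar> \<Longrightarrow> \<bar>y\<bar> \<le> \<bar>z\<bar> \<Longrightarrow> \<bar>s * x + t * y\<bar> \<le> (\<bar>s\<bar> + \<bar>t\<bar>) * \<bar>z\<bar>"
proof -
  assume h: "\<bar>x\<bar> \<le> \<bar>z\<bar>" "\<bar>y\<bar> \<le> \<bar>z\<bar>"
  have "\<bar>s * x + t * y\<bar> \<le> \<bar>s\<bar> * \<bar>x\<bar> + \<bar>t\<bar> * \<bar>y\<bar>" using abs_triangle_ineq[of "s * x" "t * y"] by (simp add: abs_mult)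
  also have "\<dots> \<le> \<bar>s\<bar> * \<bar>z\<bar> + \<bar>t\<bar> * \<bar>z\<bar>" using h by (intro add_mono mult_left_mono) auto
  finally show ?thesis by (simp add: algebra_simps)
qed

context setting begin

definition "Kf u s t = infsum (\<lambda>n. a n * (s * al u n + t * be u n) ^ N) UNIV"
definition "Gp u s t = infsum (\<lambda>n. a n * (s * al u n + t * be u n) ^ (N - 1) * al u n) UNIV"
definition "Gm u s t = infsum (\<lambda>n. a n * (s * al u n + t * be u n) ^ (N - 1) * be u n) UNIV"
definition "Bp u = infsum (\<lambda>n. b n * (posp u n) ^ N) UNIV"
definition "Bm u = infsum (\<lambda>n. b n * (negp u n) ^ N) UNIV"
definition "Cp u = infsum (\<lambda>n. c n * \<bar>posp u n\<bar> powr q) UNIV"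
definition "Cm u = infsum (\<lambda>n. c n * \<bar>negp u n\<bar> powr q) UNIV"
definition "Lp u = infsum (\<lambda>n. c n * (\<bar>posp u n\<bar> powr q * ln (\<bar>posp u n\<bar> powr r))) UNIV"
definition "Lm u = infsum (\<lambda>n. c n * (\<bar>negp u n\<bar> powr q * ln (\<bar>negp u n\<bar> powr r))) UNIV"
definition "Fp u s = (r / q\<^sup>2) * (s powr q * Cp u) - (1 / q) * (s powr q * (Lp u + r * ln s * Cp u))"
definition "Fm u s = (r / q\<^sup>2) * (s powr q * Cm u) - (1 / q) * (s powr q * (Lm u + r * ln s * Cm u))"

lemma evpow_abs: "\<bar>(x::real) ^ N\<bar> = \<bar>x\<bar> ^ N" "x ^ N = \<bar>x\<bar> ^ N"
proof -
  show "\<bar>x ^ N\<bar> = \<bar>x\<bar> ^ N" by (rule power_abs)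
  show "x ^ N = \<bar>x\<bar> ^ N" using Neven by (simp add: power_even_abs)
qed

lemma powN1: "(x::real) ^ (N - 1) * x = x ^ N"
proof -
  obtain m where m: "N = Suc m" using N2 by (cases N) auto
  then show ?thesis by (simp add: mult.commute)
qed

lemma sK: assumes "u \<in> E_space a b p"
  shows "(\<lambda>n. a n * (s * al u n + t * be u n) ^ N) summable_on UNIV"
proof (rule summable_dom[OF E_parts(1)[OF assms]])
  fix n
  have "\<bar>s * al u n + t * be u n\<bar> \<le> (\<bar>s\<bar> + \<bar>t\<bar>) * \<bar>fdiff u n\<bar>"
    by (rule lin_bound[OF abs_al_le abs_be_le])
  then have "\<bar>s * al u n + t * be u n\<bar> ^ N \<le> ((\<bar>s\<bar> + \<bar>t\<bar>) * \<bar>fdiff u n\<bar>) ^ N"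
    by (intro power_mono) auto
  also have "\<dots> = (\<bar>s\<bar> + \<bar>t\<bar>) ^ N * (fdiff u n) ^ N" by (simp add: power_mult_distrib evpow_abs(2)[of "fdiff u n"])
  finally have "\<bar>(s * al u n + t * be u n) ^ N\<bar> \<le> (\<bar>s\<bar> + \<bar>t\<bar>) ^ N * (fdiff u n) ^ N" by (simp add: power_abs)
  then have "a n * \<bar>(s * al u n + t * be u n) ^ N\<bar> \<le> a n * ((\<bar>s\<bar> + \<bar>t\<bar>) ^ N * (fdiff u n) ^ N)"
    using apos[of n] by (intro mult_left_mono) auto
  then show "\<bar>a n * (s * al u n + t * be u n) ^ N\<bar> \<le> (\<bar>s\<bar> + \<bar>t\<bar>) ^ N * (a n * fdiff u n ^ N)"
    using apos[of n] by (simp add: abs_mult algebra_simps)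
qed

lemma sG_gen: assumes "u \<in> E_space a b p" "\<And>n. \<bar>z n\<bar> \<le> \<bar>fdiff u n\<bar>"
  shows "(\<lambda>n. a n * (s * al u n + t * be u n) ^ (N - 1) * z n) summable_on UNIV"
proof (rule summable_dom[OF E_parts(1)[OF assms(1)]])
  fix n
  have "\<bar>s * al u n + t * be u n\<bar> \<le> (\<bar>s\<bar> + \<bar>t\<bar>) * \<bar>fdiff u n\<bar>"
    by (rule lin_bound[OF abs_al_le abs_be_le])
  then have "\<bar>s * al u n + t * be u n\<bar> ^ (N - 1) \<le> ((\<bar>s\<bar> + \<bar>t\<bar>) * \<bar>fdiff u n\<bar>) ^ (N - 1)"
    by (intro power_mono) auto
  then have "\<bar>s * al u n + t * be u n\<bar> ^ (N - 1) * \<bar>z n\<bar> \<le> ((\<bar>s\<bar> + \<bar>t\<bar>) * \<bar>fdiff u n\<bar>) ^ (N - 1) * \<bar>fdiff u n\<bar>"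
    using assms(2)[of n] by (intro mult_mono) auto
  also have "\<dots> = (\<bar>s\<bar> + \<bar>t\<bar>) ^ (N - 1) * \<bar>fdiff u n\<bar> ^ N"
    by (simp only: power_mult_distrib mult.assoc powN1)
  also have "\<dots> = (\<bar>s\<bar> + \<bar>t\<bar>) ^ (N - 1) * (fdiff u n) ^ N" by (simp add: evpow_abs(2)[of "fdiff u n"])
  finally have h: "\<bar>(s * al u n + t * be u n) ^ (N - 1) * z n\<bar> \<le> (\<bar>s\<bar> + \<bar>t\<bar>) ^ (N - 1) * (fdiff u n) ^ N"
    by (simp add: power_abs abs_mult)
  have "\<bar>a n * (s * al u n + t * be u n) ^ (N - 1) * z n\<bar> = a n * \<bar>(s * al u n + t * be u n) ^ (N - 1) * z n\<bar>"
    using apos[of n] by (simp add: abs_mult mult.assoc)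
  also have "\<dots> \<le> a n * ((\<bar>s\<bar> + \<bar>t\<bar>) ^ (N - 1) * (fdiff u n) ^ N)"
    using h apos[of n] by (intro mult_left_mono) auto
  finally show "\<bar>a n * (s * al u n + t * be u n) ^ (N - 1) * z n\<bar> \<le> (\<bar>s\<bar> + \<bar>t\<bar>) ^ (N - 1) * (a n * fdiff u n ^ N)"
    by (simp add: algebra_simps)
qed

lemma sGp: "u \<in> E_space a b p \<Longrightarrow> (\<lambda>n. a n * (s * al u n + t * be u n) ^ (N - 1) * al u n) summable_on UNIV"
  by (rule sG_gen) (auto intro: abs_al_le)
lemma sGm: "u \<in> E_space a b p \<Longrightarrow> (\<lambda>n. a n * (s * al u n + t * be u n) ^ (N - 1) * be u n) summable_on UNIV"
  by (rule sG_gen) (auto intro: abs_be_le)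

lemma sB: assumes "u \<in> E_space a b p"
  shows "(\<lambda>n. b n * (posp u n) ^ N) summable_on UNIV" "(\<lambda>n. b n * (negp u n) ^ N) summable_on UNIV"
proof -
  show "(\<lambda>n. b n * (posp u n) ^ N) summable_on UNIV"
  proof (rule summable_dom[OF E_parts(2)[OF assms], where C=1])
    fix n
    have "\<bar>posp u n ^ N\<bar> = \<bar>posp u n\<bar> ^ N" by (rule power_abs)
    also have "\<dots> \<le> \<bar>u n\<bar> ^ N" by (intro power_mono abs_posp_le) auto
    also have "\<dots> = u n ^ N" by (rule power_even_abs[OF Neven])
    finally have "\<bar>posp u n ^ N\<bar> \<le> u n ^ N" .
    then show "\<bar>b n * posp u n ^ N\<bar> \<le> 1 * (b n * u n ^ N)"
      using bpos[of n] by (simp add: abs_mult mult_left_mono)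
  qed
  show "(\<lambda>n. b n * (negp u n) ^ N) summable_on UNIV"
  proof (rule summable_dom[OF E_parts(2)[OF assms], where C=1])
    fix n
    have "\<bar>negp u n ^ N\<bar> = \<bar>negp u n\<bar> ^ N" by (rule power_abs)
    also have "\<dots> \<le> \<bar>u n\<bar> ^ N" by (intro power_mono abs_negp_le) auto
    also have "\<dots> = u n ^ N" by (rule power_even_abs[OF Neven])
    finally have "\<bar>negp u n ^ N\<bar> \<le> u n ^ N" .
    then show "\<bar>b n * negp u n ^ N\<bar> \<le> 1 * (b n * u n ^ N)"
      using bpos[of n] by (simp add: abs_mult mult_left_mono)
  qed
qed

lemma sC: assumes "u \<in> E_space a b p"
  shows "(\<lambda>n. c n * \<bar>posp u n\<bar> powr q) summable_on UNIV" "(\<lambda>n. c n * \<bar>negp u n\<bar> powr q) summable_on UNIV"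
    "(\<lambda>n. c n * \<bar>u n\<bar> powr q) summable_on UNIV"
  using c_sum_dom[OF assms] abs_posp_le abs_negp_le by auto

lemma sL: assumes "u \<in> D"
  shows "(\<lambda>n. c n * (\<bar>posp u n\<bar> powr q * ln (\<bar>posp u n\<bar> powr r))) summable_on UNIV"
    "(\<lambda>n. c n * (\<bar>negp u n\<bar> powr q * ln (\<bar>negp u n\<bar> powr r))) summable_on UNIV"
proof -
  have "(\<lambda>n. c n * \<bar>u n\<bar> powr q * ln (\<bar>u n\<bar> powr r)) summable_on UNIV"
    using assms unfolding D_set_def by blast
  then have "(\<lambda>n. norm (c n * \<bar>u n\<bar> powr q * ln (\<bar>u n\<bar> powr r))) summable_on UNIV"
    by (rule summable_on_iff_abs_summable_on_real[THEN iffD1])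
  then have s: "(\<lambda>n. \<bar>c n * \<bar>u n\<bar> powr q * ln (\<bar>u n\<bar> powr r)\<bar>) summable_on UNIV"
    by simp
  show "(\<lambda>n. c n * (\<bar>posp u n\<bar> powr q * ln (\<bar>posp u n\<bar> powr r))) summable_on UNIV"
  proof (rule summable_dom[OF s, where C=1])
    fix n show "\<bar>c n * (\<bar>posp u n\<bar> powr q * ln (\<bar>posp u n\<bar> powr r))\<bar> \<le> 1 * \<bar>c n * \<bar>u n\<bar> powr q * ln (\<bar>u n\<bar> powr r)\<bar>"
      using pos_cases[of u n] by (auto simp: mult.assoc)
  qed
  show "(\<lambda>n. c n * (\<bar>negp u n\<bar> powr q * ln (\<bar>negp u n\<bar> powr r))) summable_on UNIV"
  proof (rule summable_dom[OF s, where C=1])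
    fix n show "\<bar>c n * (\<bar>negp u n\<bar> powr q * ln (\<bar>negp u n\<bar> powr r))\<bar> \<le> 1 * \<bar>c n * \<bar>u n\<bar> powr q * ln (\<bar>u n\<bar> powr r)\<bar>"
      using pos_cases[of u n] by (auto simp: mult.assoc)
  qed
qed

end

context setting begin

lemma W_powN: "s \<ge> 0 \<Longrightarrow> t \<ge> 0 \<Longrightarrow> (W u s t n) ^ N = s ^ N * (posp u n) ^ N + t ^ N * (negp u n) ^ N"
  using pos_cases[of u n] N2 by (auto simp: W_def power_mult_distrib)

lemma W_powq: "s \<ge> 0 \<Longrightarrow> t \<ge> 0 \<Longrightarrow>
  \<bar>W u s t n\<bar> powr q = s powr q * \<bar>posp u n\<bar> powr q + t powr q * \<bar>negp u n\<bar> powr q"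
proof -
  assume st: "s \<ge> 0" "t \<ge> 0"
  from pos_cases[of u n] show ?thesis
  proof
    assume h: "u n > 0 \<and> posp u n = u n \<and> negp u n = 0"
    then show ?thesis using st q_pos by (simp add: W_def abs_mult powr_mult)
  next
    assume h: "u n \<le> 0 \<and> posp u n = 0 \<and> negp u n = u n"
    then have "\<bar>W u s t n\<bar> = t * \<bar>negp u n\<bar>" using st by (simp add: W_def abs_mult)
    moreover have "(t * \<bar>negp u n\<bar>) powr q = t powr q * \<bar>negp u n\<bar> powr q"
      using st by (simp add: powr_mult)
    ultimately have "\<bar>W u s t n\<bar> powr q = t powr q * \<bar>negp u n\<bar> powr q" by simp
    then show ?thesis using h by simp
  qed
qed

lemma W_lnq: "s \<ge> 0 \<Longrightarrow> t \<ge> 0 \<Longrightarrow>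
  c n * \<bar>W u s t n\<bar> powr q * ln (\<bar>W u s t n\<bar> powr r)
  = s powr q * (c n * (\<bar>posp u n\<bar> powr q * ln (\<bar>posp u n\<bar> powr r)))
    + (s powr q * (r * ln s)) * (c n * \<bar>posp u n\<bar> powr q)
    + t powr q * (c n * (\<bar>negp u n\<bar> powr q * ln (\<bar>negp u n\<bar> powr r)))
    + (t powr q * (r * ln t)) * (c n * \<bar>negp u n\<bar> powr q)"
proof -
  assume st: "s \<ge> 0" "t \<ge> 0"
  from pos_cases[of u n] show ?thesis
  proof
    assume h: "u n > 0 \<and> posp u n = u n \<and> negp u n = 0"
    then have "W u s t n = s * posp u n" by (simp add: W_def)
    then show ?thesis using lnW0[OF st(1), of "posp u n"] h q_pos by (simp add: algebra_simps)
  next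
    assume h: "u n \<le> 0 \<and> posp u n = 0 \<and> negp u n = u n"
    then have "W u s t n = t * negp u n" by (simp add: W_def)
    then show ?thesis using lnW0[OF st(2), of "negp u n"] h q_pos by (simp add: algebra_simps)
  qed
qed

lemma sumA: assumes "u \<in> E_space a b p" "s \<ge> 0" "t \<ge> 0"
  shows "(\<lambda>n. a n * (fdiff (W u s t) n) ^ N + b n * (W u s t n) ^ N) summable_on UNIV"
    "infsum (\<lambda>n. a n * (fdiff (W u s t) n) ^ N + b n * (W u s t n) ^ N) UNIV = Kf u s t + s ^ N * Bp u + t ^ N * Bm u"
proof -
  have eq: "a n * (fdiff (W u s t) n) ^ N + b n * (W u s t n) ^ N
     = 1 * (a n * (s * al u n + t * be u n) ^ N) + s ^ N * (b n * (posp u n) ^ N) + t ^ N * (b n * (negp u n) ^ N)" for n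
    using W_powN[OF assms(2,3), of u n] by (simp add: fdiff_W algebra_simps)
  note r = infsum_comb3[OF sK[OF assms(1)] sB[OF assms(1)] eq]
  show "(\<lambda>n. a n * (fdiff (W u s t) n) ^ N + b n * (W u s t n) ^ N) summable_on UNIV" using r(1) .
  show "infsum (\<lambda>n. a n * (fdiff (W u s t) n) ^ N + b n * (W u s t n) ^ N) UNIV = Kf u s t + s ^ N * Bp u + t ^ N * Bm u"
    using r(2) by (simp add: Kf_def Bp_def Bm_def)
qed

lemma sumC: assumes "u \<in> E_space a b p" "s \<ge> 0" "t \<ge> 0"
  shows "infsum (\<lambda>n. c n * \<bar>W u s t n\<bar> powr q) UNIV = s powr q * Cp u + t powr q * Cm u"
proof -
  have eq: "c n * \<bar>W u s t n\<bar> powr q = s powr q * (c n * \<bar>posp u n\<bar> powr q) + t powr q * (c n * \<bar>negp u n\<bar> powr q)" for n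
    using W_powq[OF assms(2,3), of u n] by (simp add: algebra_simps)
  show ?thesis using infsum_comb2(2)[OF sC(1,2)[OF assms(1)] eq] by (simp add: Cp_def Cm_def)
qed

lemma sumL: assumes "u \<in> D" "s \<ge> 0" "t \<ge> 0"
  shows "(\<lambda>n. c n * \<bar>W u s t n\<bar> powr q * ln (\<bar>W u s t n\<bar> powr r)) summable_on UNIV"
    "infsum (\<lambda>n. c n * \<bar>W u s t n\<bar> powr q * ln (\<bar>W u s t n\<bar> powr r)) UNIV
      = s powr q * (Lp u + r * ln s * Cp u) + t powr q * (Lm u + r * ln t * Cm u)"
proof -
  have E: "u \<in> E_space a b p" using assms(1) by (simp add: D_set_def)
  note r = infsum_comb4[OF sL(1)[OF assms(1)] sC(1)[OF E] sL(2)[OF assms(1)] sC(2)[OF E] W_lnq[OF assms(2,3)]]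
  show "(\<lambda>n. c n * \<bar>W u s t n\<bar> powr q * ln (\<bar>W u s t n\<bar> powr r)) summable_on UNIV" using r(1) .
  show "infsum (\<lambda>n. c n * \<bar>W u s t n\<bar> powr q * ln (\<bar>W u s t n\<bar> powr r)) UNIV
      = s powr q * (Lp u + r * ln s * Cp u) + t powr q * (Lm u + r * ln t * Cm u)"
    using r(2) by (simp add: Lp_def Lm_def Cp_def Cm_def algebra_simps)
qed

lemma normE_pow: "normE a b p u powr p = infsum (\<lambda>n. a n * \<bar>fdiff u n\<bar> powr p + b n * \<bar>u n\<bar> powr p) UNIV"
proof -
  define X where "X = infsum (\<lambda>n. a n * \<bar>fdiff u n\<bar> powr p + b n * \<bar>u n\<bar> powr p) UNIV"
  have X0: "X \<ge> 0" unfolding X_def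
    using apos bpos by (intro infsum_nonneg add_nonneg_nonneg mult_nonneg_nonneg) (auto simp: less_imp_le)
  have "normE a b p u powr p = (X powr (1 / p)) powr p" by (simp add: normE_def X_def)
  also have "\<dots> = X" using X0 p_pos by (simp add: powr_powr)
  finally show ?thesis by (simp add: X_def)
qed

lemma Hform: assumes "u \<in> D" "s \<ge> 0" "t \<ge> 0"
  shows "I (W u s t) = (1 / p) * (Kf u s t + s ^ N * Bp u + t ^ N * Bm u) + Fp u s + Fm u t"
proof -
  have E: "u \<in> E_space a b p" using assms(1) by (simp add: D_set_def)
  have n: "normE a b p (W u s t) powr p = Kf u s t + s ^ N * Bp u + t ^ N * Bm u"
    using sumA(2)[OF E assms(2,3)] by (simp add: normE_pow absN)
  show ?thesis
    unfolding Ifun_def n sumC[OF E assms(2,3)] sumL(2)[OF assms]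
    by (simp add: Fp_def Fm_def algebra_simps)
qed

lemma WD: assumes "u \<in> D" "s \<ge> 0" "t \<ge> 0" shows "W u s t \<in> D"
proof -
  have E: "u \<in> E_space a b p" using assms(1) by (simp add: D_set_def)
  have "W u s t \<in> E_space a b p" using sumA(1)[OF E assms(2,3)] by (simp add: E_iff)
  then show ?thesis using sumL(1)[OF assms] by (simp add: D_set_def)
qed

end

context setting begin

lemma pw2a: "(k::real) * \<bar>x\<bar> powr (p - 2) * x * y = k * (x ^ (N - 1) * y)"
proof -
  have "k * \<bar>x\<bar> powr (p - 2) * x * y = k * (\<bar>x\<bar> powr (p - 2) * x * y)" by (simp only: mult.assoc)
  then show ?thesis by (simp only: pw2)
qed

lemma q2a: "(k::real) * \<bar>x\<bar> powr (q - 2) * x * x * l = k * \<bar>x\<bar> powr q * l"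
proof -
  have "k * \<bar>x\<bar> powr (q - 2) * x * x * l = k * (\<bar>x\<bar> powr (q - 2) * x * x) * l" by (simp only: mult.assoc)
  then show ?thesis by (simp only: q2)
qed

lemma fdiff_sc: "fdiff (\<lambda>n. s * v n) n = s * fdiff v n"
  by (simp add: fdiff_def algebra_simps)

lemma dIpos: assumes "u \<in> D" "s \<ge> 0" "t \<ge> 0"
  shows "dI (W u s t) (posp (W u s t)) = s * Gp u s t + s ^ N * Bp u - s powr q * (Lp u + r * ln s * Cp u)"
proof -
  have E: "u \<in> E_space a b p" using assms(1) by (simp add: D_set_def)
  have e1: "a n * \<bar>fdiff (W u s t) n\<bar> powr (p - 2) * fdiff (W u s t) n * fdiff (\<lambda>n. s * posp u n) n
      + b n * \<bar>W u s t n\<bar> powr (p - 2) * W u s t n * (s * posp u n)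
    = s * (a n * (s * al u n + t * be u n) ^ (N - 1) * al u n) + s ^ N * (b n * posp u n ^ N)" for n
  proof -
    have "(W u s t n) ^ (N - 1) * (s * posp u n) = s ^ N * posp u n ^ N"
      using pos_cases[of u n]
    proof
      assume h: "u n > 0 \<and> posp u n = u n \<and> negp u n = 0"
      then have w: "W u s t n = s * posp u n" by (simp add: W_def)
      show ?thesis unfolding w powN1 by (rule power_mult_distrib)
    next
      assume h: "u n \<le> 0 \<and> posp u n = 0 \<and> negp u n = u n"
      then show ?thesis using N2 by simp
    qed
    note h = this
    have "a n * \<bar>fdiff (W u s t) n\<bar> powr (p - 2) * fdiff (W u s t) n * fdiff (\<lambda>n. s * posp u n) n
      + b n * \<bar>W u s t n\<bar> powr (p - 2) * W u s t n * (s * posp u n)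
      = a n * ((s * al u n + t * be u n) ^ (N - 1) * (s * al u n)) + b n * ((W u s t n) ^ (N - 1) * (s * posp u n))"
      by (simp only: pw2a fdiff_sc fdiff_W al_def[symmetric])
    also have "\<dots> = a n * ((s * al u n + t * be u n) ^ (N - 1) * (s * al u n)) + b n * (s ^ N * posp u n ^ N)"
      by (simp only: h)
    finally show ?thesis by (simp add: algebra_simps)
  qed
  have e2: "c n * \<bar>W u s t n\<bar> powr (q - 2) * W u s t n * (s * posp u n) * ln (\<bar>W u s t n\<bar> powr r)
    = s powr q * (c n * (\<bar>posp u n\<bar> powr q * ln (\<bar>posp u n\<bar> powr r))) + (s powr q * (r * ln s)) * (c n * \<bar>posp u n\<bar> powr q)" for n
    using pos_cases[of u n]
  proof
    assume h: "u n > 0 \<and> posp u n = u n \<and> negp u n = 0"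
    then have w: "W u s t n = s * posp u n" by (simp add: W_def)
    show ?thesis unfolding w q2a using lnW0[OF assms(2), of "posp u n"] by (simp add: algebra_simps)
  next
    assume h: "u n \<le> 0 \<and> posp u n = 0 \<and> negp u n = u n"
    then show ?thesis using q_pos by simp
  qed
  have r1: "infsum (\<lambda>n. a n * \<bar>fdiff (W u s t) n\<bar> powr (p - 2) * fdiff (W u s t) n * fdiff (\<lambda>n. s * posp u n) n
      + b n * \<bar>W u s t n\<bar> powr (p - 2) * W u s t n * (s * posp u n)) UNIV = s * Gp u s t + s ^ N * Bp u"
    using infsum_comb2(2)[OF sGp[OF E] sB(1)[OF E] e1] by (simp add: Gp_def Bp_def)
  have r2: "infsum (\<lambda>n. c n * \<bar>W u s t n\<bar> powr (q - 2) * W u s t n * (s * posp u n) * ln (\<bar>W u s t n\<bar> powr r)) UNIV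
      = s powr q * (Lp u + r * ln s * Cp u)"
    using infsum_comb2(2)[OF sL(1)[OF assms(1)] sC(1)[OF E] e2] by (simp add: Lp_def Cp_def algebra_simps)
  show ?thesis unfolding dIfun_def posp_W[OF assms(2,3)] r1 r2 ..
qed

lemma dIneg: assumes "u \<in> D" "s \<ge> 0" "t \<ge> 0"
  shows "dI (W u s t) (negp (W u s t)) = t * Gm u s t + t ^ N * Bm u - t powr q * (Lm u + r * ln t * Cm u)"
proof -
  have E: "u \<in> E_space a b p" using assms(1) by (simp add: D_set_def)
  have e1: "a n * \<bar>fdiff (W u s t) n\<bar> powr (p - 2) * fdiff (W u s t) n * fdiff (\<lambda>n. t * negp u n) n
      + b n * \<bar>W u s t n\<bar> powr (p - 2) * W u s t n * (t * negp u n)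
    = t * (a n * (s * al u n + t * be u n) ^ (N - 1) * be u n) + t ^ N * (b n * negp u n ^ N)" for n
  proof -
    have "(W u s t n) ^ (N - 1) * (t * negp u n) = t ^ N * negp u n ^ N"
      using pos_cases[of u n]
    proof
      assume h: "u n > 0 \<and> posp u n = u n \<and> negp u n = 0"
      then show ?thesis using N2 by simp
    next
      assume h: "u n \<le> 0 \<and> posp u n = 0 \<and> negp u n = u n"
      then have w: "W u s t n = t * negp u n" by (simp add: W_def)
      show ?thesis unfolding w powN1 by (rule power_mult_distrib)
    qed
    note h = this
    have "a n * \<bar>fdiff (W u s t) n\<bar> powr (p - 2) * fdiff (W u s t) n * fdiff (\<lambda>n. t * negp u n) n
      + b n * \<bar>W u s t n\<bar> powr (p - 2) * W u s t n * (t * negp u n)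
      = a n * ((s * al u n + t * be u n) ^ (N - 1) * (t * be u n)) + b n * ((W u s t n) ^ (N - 1) * (t * negp u n))"
      by (simp only: pw2a fdiff_sc fdiff_W be_def[symmetric])
    also have "\<dots> = a n * ((s * al u n + t * be u n) ^ (N - 1) * (t * be u n)) + b n * (t ^ N * negp u n ^ N)"
      by (simp only: h)
    finally show ?thesis by (simp add: algebra_simps)
  qed
  have e2: "c n * \<bar>W u s t n\<bar> powr (q - 2) * W u s t n * (t * negp u n) * ln (\<bar>W u s t n\<bar> powr r)
    = t powr q * (c n * (\<bar>negp u n\<bar> powr q * ln (\<bar>negp u n\<bar> powr r))) + (t powr q * (r * ln t)) * (c n * \<bar>negp u n\<bar> powr q)" for n
    using pos_cases[of u n]
  proof
    assume h: "u n > 0 \<and> posp u n = u n \<and> negp u n = 0"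
    then show ?thesis using q_pos by simp
  next
    assume h: "u n \<le> 0 \<and> posp u n = 0 \<and> negp u n = u n"
    then have w: "W u s t n = t * negp u n" by (simp add: W_def)
    show ?thesis unfolding w q2a using lnW0[OF assms(3), of "negp u n"] by (simp add: algebra_simps)
  qed
  have r1: "infsum (\<lambda>n. a n * \<bar>fdiff (W u s t) n\<bar> powr (p - 2) * fdiff (W u s t) n * fdiff (\<lambda>n. t * negp u n) n
      + b n * \<bar>W u s t n\<bar> powr (p - 2) * W u s t n * (t * negp u n)) UNIV = t * Gm u s t + t ^ N * Bm u"
    using infsum_comb2(2)[OF sGm[OF E] sB(2)[OF E] e1] by (simp add: Gm_def Bm_def)
  have r2: "infsum (\<lambda>n. c n * \<bar>W u s t n\<bar> powr (q - 2) * W u s t n * (t * negp u n) * ln (\<bar>W u s t n\<bar> powr r)) UNIV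
      = t powr q * (Lm u + r * ln t * Cm u)"
    using infsum_comb2(2)[OF sL(2)[OF assms(1)] sC(2)[OF E] e2] by (simp add: Lm_def Cm_def algebra_simps)
  show ?thesis unfolding dIfun_def negp_W[OF assms(2,3)] r1 r2 ..
qed

lemma dIself: assumes "u \<in> D" "s \<ge> 0" "t \<ge> 0"
  shows "dI (W u s t) (W u s t) = Kf u s t + s ^ N * Bp u + t ^ N * Bm u
     - (s powr q * (Lp u + r * ln s * Cp u) + t powr q * (Lm u + r * ln t * Cm u))"
proof -
  have E: "u \<in> E_space a b p" using assms(1) by (simp add: D_set_def)
  have e1: "(\<lambda>n. a n * \<bar>fdiff (W u s t) n\<bar> powr (p - 2) * fdiff (W u s t) n * fdiff (W u s t) n
      + b n * \<bar>W u s t n\<bar> powr (p - 2) * W u s t n * W u s t n)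
    = (\<lambda>n. a n * (fdiff (W u s t) n) ^ N + b n * (W u s t n) ^ N)"
    by (simp only: pw2a powN1)
  have e2: "(\<lambda>n. c n * \<bar>W u s t n\<bar> powr (q - 2) * W u s t n * W u s t n * ln (\<bar>W u s t n\<bar> powr r))
    = (\<lambda>n. c n * \<bar>W u s t n\<bar> powr q * ln (\<bar>W u s t n\<bar> powr r))"
    by (simp add: q2a)
  show ?thesis unfolding dIfun_def e1 e2 sumA(2)[OF E assms(2,3)] sumL(2)[OF assms] ..
qed

end

lemma infsum_pos_single:
  fixes f :: "'a \<Rightarrow> real"
  assumes "f summable_on UNIV" "\<And>n. f n \<ge> 0" "f k > 0"
  shows "infsum f UNIV > 0"
proof -
  have "sum f {k} \<le> infsum f UNIV" by (rule finite_sum_le_infsum) (use assms in auto)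
  then show ?thesis using assms(3) by simp
qed

context setting begin

lemma Kf_nonneg: "Kf u s t \<ge> 0"
  unfolding Kf_def using apos Neven
  by (intro infsum_nonneg mult_nonneg_nonneg) (auto simp: less_imp_le zero_le_even_power)

lemma Bp_nonneg: "Bp u \<ge> 0" and Bm_nonneg: "Bm u \<ge> 0"
  unfolding Bp_def Bm_def using bpos Neven
  by (auto intro!: infsum_nonneg mult_nonneg_nonneg simp: less_imp_le zero_le_even_power)

lemma Cp_nonneg: "Cp u \<ge> 0" and Cm_nonneg: "Cm u \<ge> 0"
  unfolding Cp_def Cm_def using cpos
  by (auto intro!: infsum_nonneg mult_nonneg_nonneg simp: less_imp_le)

lemma BCp_pos: assumes "u \<in> E_space a b p" "posp u \<noteq> (\<lambda>_. 0)"
  shows "Bp u > 0" "Cp u > 0"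
proof -
  obtain k where k: "posp u k \<noteq> 0" using assms(2) by auto
  have pk: "posp u k > 0" using k posp_ge0[of u k] by linarith
  show "Bp u > 0" unfolding Bp_def
    by (rule infsum_pos_single[OF sB(1)[OF assms(1)], where k=k])
       (use bpos Neven pk in \<open>auto intro!: mult_nonneg_nonneg mult_pos_pos simp: less_imp_le zero_le_even_power\<close>)
  show "Cp u > 0" unfolding Cp_def
    by (rule infsum_pos_single[OF sC(1)[OF assms(1)], where k=k])
       (use cpos pk in \<open>auto intro!: mult_nonneg_nonneg mult_pos_pos simp: less_imp_le\<close>)
qed

lemma BCm_pos: assumes "u \<in> E_space a b p" "negp u \<noteq> (\<lambda>_. 0)"
  shows "Bm u > 0" "Cm u > 0"
proof -
  obtain k where k: "negp u k \<noteq> 0" using assms(2) by auto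
  have pk: "negp u k < 0" using k negp_le0[of u k] by linarith
  have pN: "negp u k ^ N > 0" using pk Neven N2 by (simp add: zero_less_power_eq)
  show "Bm u > 0" unfolding Bm_def
    by (rule infsum_pos_single[OF sB(2)[OF assms(1)], where k=k])
       (use bpos Neven pN in \<open>auto intro!: mult_nonneg_nonneg mult_pos_pos simp: less_imp_le zero_le_even_power\<close>)
  show "Cm u > 0" unfolding Cm_def
    by (rule infsum_pos_single[OF sC(2)[OF assms(1)], where k=k])
       (use cpos pk in \<open>auto intro!: mult_nonneg_nonneg mult_pos_pos simp: less_imp_le\<close>)
qed

lemma nonzero_split: "u \<noteq> (\<lambda>_. 0) \<Longrightarrow> posp u \<noteq> (\<lambda>_. 0) \<or> negp u \<noteq> (\<lambda>_. 0)"
proof -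
  assume "u \<noteq> (\<lambda>_. 0)"
  then obtain k where "u k \<noteq> 0" by auto
  then have "posp u k \<noteq> 0 \<or> negp u k \<noteq> 0" using pos_cases[of u k] by auto
  then show ?thesis by (metis)
qed

lemma Kf_diag: assumes "u \<in> E_space a b p" shows "Kf u s s = s ^ N * Kf u 1 1"
proof -
  have "(\<lambda>n. a n * (s * al u n + s * be u n) ^ N) = (\<lambda>n. s ^ N * (a n * (1 * al u n + 1 * be u n) ^ N))"
    by (simp add: power_mult_distrib[symmetric] algebra_simps)
  moreover have "(\<lambda>n. a n * (1 * al u n + 1 * be u n) ^ N) summable_on UNIV" by (rule sK[OF assms])
  ultimately show ?thesis unfolding Kf_def by (simp add: infsum_cmult_right)
qed

lemma nehari_ineq: assumes "v \<in> D" "dI v v = 0" "s \<ge> 0"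
  shows "I (scal s v) \<le> I v"
proof -
  have E: "v \<in> E_space a b p" using assms(1) by (simp add: D_set_def)
  have d: "Kf v 1 1 + Bp v + Bm v - (Lp v + Lm v) = 0"
    using dIself[OF assms(1), of 1 1] assms(2) by (simp add: W11)
  define A where "A = Kf v 1 1 + Bp v + Bm v"
  define C where "C = Cp v + Cm v"
  have A0: "A \<ge> 0" using Kf_nonneg Bp_nonneg Bm_nonneg by (simp add: A_def add_nonneg_nonneg)
  have C0: "C \<ge> 0" using Cp_nonneg Cm_nonneg by (simp add: C_def add_nonneg_nonneg)
  have Lm: "Lm v = A - Lp v" using d by (simp add: A_def)
  have Is: "I (scal s v) = (1 / p) * (s ^ N * Kf v 1 1 + s ^ N * Bp v + s ^ N * Bm v) + Fp v s + Fm v s"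
    unfolding scal_W Hform[OF assms(1,3,3)] Kf_diag[OF E, of s] ..
  have I1: "I v = (1 / p) * (Kf v 1 1 + 1 ^ N * Bp v + 1 ^ N * Bm v) + Fp v 1 + Fm v 1"
    using Hform[OF assms(1), of 1 1] by (simp only: W11)
  have psi: "(1 / real N) * (1 - s ^ N) - (1 / q) * (1 - s powr q) \<ge> 0"
    using psi_nonneg[OF assms(3) N1 Nq] .
  have phi: "1 - s powr q + q * s powr q * ln s \<ge> 0" using phi_nonneg[OF assms(3) q_pos] .
  have "I v - I (scal s v) = A * ((1 / real N) * (1 - s ^ N) - (1 / q) * (1 - s powr q))
      + (r / q\<^sup>2 * C) * (1 - s powr q + q * s powr q * ln s)"
    unfolding Is I1 Fp_def Fm_def Lm A_def C_def using q_pos N1 by (simp add: pN field_simps power2_eq_square)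
  also have "\<dots> \<ge> 0"
  proof -
    have h1: "r / q\<^sup>2 * C \<ge> 0" using C0 rpos q_pos by simp
    have "0 \<le> A * ((1 / real N) * (1 - s ^ N) - (1 / q) * (1 - s powr q))" by (rule mult_nonneg_nonneg[OF A0 psi])
    moreover have "0 \<le> (r / q\<^sup>2 * C) * (1 - s powr q + q * s powr q * ln s)" by (rule mult_nonneg_nonneg[OF h1 phi])
    ultimately show ?thesis by (rule add_nonneg_nonneg)
  qed
  finally show ?thesis by simp
qed

end

context setting begin

lemma nodal_ineq: assumes "v \<in> D" "dI v (posp v) = 0" "dI v (negp v) = 0" "s \<ge> 0" "t \<ge> 0"
  shows "I (W v s t) \<le> I v"
proof -
  have E: "v \<in> E_space a b p" using assms(1) by (simp add: D_set_def)
  have dp: "Gp v 1 1 + Bp v - Lp v = 0" using dIpos[OF assms(1), of 1 1] assms(2) by (simp add: W11)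
  have dm: "Gm v 1 1 + Bm v - Lm v = 0" using dIneg[OF assms(1), of 1 1] assms(3) by (simp add: W11)
  define X where "X = infsum (\<lambda>n. a n * ((1 / real N) * ((al v n + be v n) ^ N - (s * al v n + t * be v n) ^ N)
      - (1 / q) * (1 - s powr q) * ((al v n + be v n) ^ (N - 1) * al v n)
      - (1 / q) * (1 - t powr q) * ((al v n + be v n) ^ (N - 1) * be v n))) UNIV"
  have X0: "X \<ge> 0" unfolding X_def
  proof (rule infsum_nonneg)
    fix n
    show "0 \<le> a n * ((1 / real N) * ((al v n + be v n) ^ N - (s * al v n + t * be v n) ^ N)
      - (1 / q) * (1 - s powr q) * ((al v n + be v n) ^ (N - 1) * al v n)
      - (1 / q) * (1 - t powr q) * ((al v n + be v n) ^ (N - 1) * be v n))"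
      using cross_gen[OF Neven N2 Nq assms(4,5) al_be_sign[of v n]] apos[of n]
      by (intro mult_nonneg_nonneg) auto
  qed
  have Xeq: "X = (1 / real N) * Kf v 1 1 + (- (1 / real N)) * Kf v s t + (- ((1 / q) * (1 - s powr q))) * Gp v 1 1
      + (- ((1 / q) * (1 - t powr q))) * Gm v 1 1"
    unfolding X_def Kf_def Gp_def Gm_def
    by (rule infsum_comb4(2)[OF sK[OF E] sK[OF E] sGp[OF E] sGm[OF E]]) (simp add: algebra_simps)
  have Ist: "I (W v s t) = (1 / p) * (Kf v s t + s ^ N * Bp v + t ^ N * Bm v) + Fp v s + Fm v t"
    by (rule Hform[OF assms(1,4,5)])
  have I1: "I v = (1 / p) * (Kf v 1 1 + 1 ^ N * Bp v + 1 ^ N * Bm v) + Fp v 1 + Fm v 1"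
    using Hform[OF assms(1), of 1 1] by (simp only: W11)
  have Lp: "Lp v = Gp v 1 1 + Bp v" using dp by simp
  have Lm: "Lm v = Gm v 1 1 + Bm v" using dm by simp
  have psis: "(1 / real N) * (1 - s ^ N) - (1 / q) * (1 - s powr q) \<ge> 0" using psi_nonneg[OF assms(4) N1 Nq] .
  have psit: "(1 / real N) * (1 - t ^ N) - (1 / q) * (1 - t powr q) \<ge> 0" using psi_nonneg[OF assms(5) N1 Nq] .
  have phis: "1 - s powr q + q * s powr q * ln s \<ge> 0" using phi_nonneg[OF assms(4) q_pos] .
  have phit: "1 - t powr q + q * t powr q * ln t \<ge> 0" using phi_nonneg[OF assms(5) q_pos] .
  have "I v - I (W v s t) = X + Bp v * ((1 / real N) * (1 - s ^ N) - (1 / q) * (1 - s powr q))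
     + Bm v * ((1 / real N) * (1 - t ^ N) - (1 / q) * (1 - t powr q))
     + (r / q\<^sup>2 * Cp v) * (1 - s powr q + q * s powr q * ln s)
     + (r / q\<^sup>2 * Cm v) * (1 - t powr q + q * t powr q * ln t)"
    unfolding Ist I1 Fp_def Fm_def Lp Lm Xeq using q_pos N1 by (simp add: pN field_simps power2_eq_square)
  also have "\<dots> \<ge> 0"
  proof -
    have h1: "r / q\<^sup>2 * Cp v \<ge> 0" "r / q\<^sup>2 * Cm v \<ge> 0" using Cp_nonneg Cm_nonneg rpos q_pos by simp_all
    have "0 \<le> Bp v * ((1 / real N) * (1 - s ^ N) - (1 / q) * (1 - s powr q))" by (rule mult_nonneg_nonneg[OF Bp_nonneg psis])
    moreover have "0 \<le> Bm v * ((1 / real N) * (1 - t ^ N) - (1 / q) * (1 - t powr q))" by (rule mult_nonneg_nonneg[OF Bm_nonneg psit])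
    moreover have "0 \<le> (r / q\<^sup>2 * Cp v) * (1 - s powr q + q * s powr q * ln s)" by (rule mult_nonneg_nonneg[OF h1(1) phis])
    moreover have "0 \<le> (r / q\<^sup>2 * Cm v) * (1 - t powr q + q * t powr q * ln t)" by (rule mult_nonneg_nonneg[OF h1(2) phit])
    ultimately show ?thesis using X0 by linarith
  qed
  finally show ?thesis by simp
qed

end

lemma cont_powr_ln:
  fixes q :: real assumes q: "q > 0"
  shows "continuous_on {0..} (\<lambda>x::real. x powr q * ln x)"
  unfolding continuous_on_def
proof (intro ballI)
  fix x :: real assume "x \<in> {0..}"
  show "((\<lambda>x. x powr q * ln x) \<longlongrightarrow> x powr q * ln x) (at x within {0..})"
  proof (cases "x = 0")
    case False
    then have "((\<lambda>x. x powr q * ln x) \<longlongrightarrow> x powr q * ln x) (at x)"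
      by (intro tendsto_intros) auto
    then show ?thesis by (rule tendsto_within_subset) auto
  next
    case True
    have ev: "eventually (\<lambda>y. norm (y powr q * ln y) \<le> (2 / q) * y powr (q / 2)) (at 0 within {0..})"
      unfolding eventually_at
    proof (rule exI[of _ 1], intro conjI ballI impI)
      show "(0::real) < 1" by simp
    next
      fix y :: real assume y: "y \<in> {0..}" "y \<noteq> 0 \<and> dist y 0 < 1"
      then have y0: "y > 0" and y1: "y < 1" by auto
      define z where "z = y powr (q / 2)"
      have z0: "z > 0" using y0 by (simp add: z_def)
      have lnz: "ln (1 / z) = - (q / 2) * ln y" using y0 by (simp add: z_def ln_div ln_powr)
      have "ln (1 / z) \<le> 1 / z - 1" using z0 by (intro ln_le_minus_one) auto
      then have "- (q / 2) * ln y \<le> 1 / z" using lnz by simp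
      then have "(2 / q) * (- (q / 2) * ln y) \<le> (2 / q) * (1 / z)" using q by (intro mult_left_mono) auto
      then have "- ln y \<le> (2 / q) / z" using q by simp
      moreover have yq: "y powr q = z * z" using y0 by (simp add: z_def powr_add[symmetric])
      ultimately have "y powr q * (- ln y) \<le> (z * z) * ((2 / q) / z)"
        using z0 unfolding yq by (intro mult_left_mono) auto
      also have "\<dots> = (2 / q) * z" using z0 by (simp add: field_simps)
      finally have "y powr q * (- ln y) \<le> (2 / q) * z" .
      moreover have "ln y < 0" using y0 y1 by simp
      ultimately show "norm (y powr q * ln y) \<le> (2 / q) * y powr (q / 2)"
        using y0 by (simp add: z_def abs_mult)
    qed
    have ev2: "eventually (\<lambda>y::real. y \<ge> 0) (at 0 within {0..})"
      unfolding eventually_at by (intro exI[of _ 1]) auto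
    have "((\<lambda>y::real. (2 / q) * y powr (q / 2)) \<longlongrightarrow> (2 / q) * 0 powr (q / 2)) (at 0 within {0..})"
      by (intro tendsto_intros tendsto_powr') (use q ev2 in auto)
    then have "((\<lambda>y::real. (2 / q) * y powr (q / 2)) \<longlongrightarrow> 0) (at 0 within {0..})" by simp
    from Lim_null_comparison[OF ev this] show ?thesis using True by simp
  qed
qed

context setting begin

definition "Qk u k = infsum (\<lambda>n. a n * (al u n ^ k * be u n ^ (N - k))) UNIV"

lemma sQ: assumes "u \<in> E_space a b p" "k \<le> N"
  shows "(\<lambda>n. a n * (al u n ^ k * be u n ^ (N - k))) summable_on UNIV"
proof (rule summable_dom[OF E_parts(1)[OF assms(1)], where C=1])
  fix n
  have "\<bar>al u n ^ k * be u n ^ (N - k)\<bar> = \<bar>al u n\<bar> ^ k * \<bar>be u n\<bar> ^ (N - k)" by (simp add: abs_mult power_abs)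
  also have "\<dots> \<le> \<bar>fdiff u n\<bar> ^ k * \<bar>fdiff u n\<bar> ^ (N - k)"
    by (intro mult_mono power_mono abs_al_le abs_be_le) auto
  also have "\<dots> = \<bar>fdiff u n\<bar> ^ N" using assms(2) by (simp add: power_add[symmetric])
  also have "\<dots> = fdiff u n ^ N" by (rule power_even_abs[OF Neven])
  finally have h: "\<bar>al u n ^ k * be u n ^ (N - k)\<bar> \<le> fdiff u n ^ N" .
  show "\<bar>a n * (al u n ^ k * be u n ^ (N - k))\<bar> \<le> 1 * (a n * fdiff u n ^ N)"
    using mult_left_mono[OF h, of "a n"] apos[of n] by (simp add: abs_mult)
qed

lemma Kf_binom: assumes "u \<in> E_space a b p"
  shows "Kf u s t = (\<Sum>k\<in>{..N}. of_nat (N choose k) * s ^ k * t ^ (N - k) * Qk u k)"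
proof -
  define f where "f k n = (of_nat (N choose k) * s ^ k * t ^ (N - k)) * (a n * (al u n ^ k * be u n ^ (N - k)))" for k n
  have pt: "a n * (s * al u n + t * be u n) ^ N = (\<Sum>k\<in>{..N}. f k n)" for n
  proof -
    have "a n * (s * al u n + t * be u n) ^ N
        = (\<Sum>k\<in>{..N}. a n * (of_nat (N choose k) * (s * al u n) ^ k * (t * be u n) ^ (N - k)))"
      by (simp only: binomial_ring sum_distrib_left)
    also have "\<dots> = (\<Sum>k\<in>{..N}. f k n)"
      unfolding f_def by (intro sum.cong refl) (simp add: power_mult_distrib mult_ac)
    finally show ?thesis .
  qed
  have sf: "f k summable_on UNIV" if "k \<in> {..N}" for k
    unfolding f_def using sQ[OF assms, of k] that by (intro summable_on_cmult_right) auto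
  have "Kf u s t = infsum (\<lambda>n. \<Sum>k\<in>{..N}. f k n) UNIV" unfolding Kf_def pt ..
  also have "\<dots> = (\<Sum>k\<in>{..N}. infsum (f k) UNIV)" using summable_on_sum_fin[of "{..N}" f UNIV] sf by auto
  also have "\<dots> = (\<Sum>k\<in>{..N}. of_nat (N choose k) * s ^ k * t ^ (N - k) * Qk u k)"
  proof (rule sum.cong[OF refl])
    fix k assume k: "k \<in> {..N}"
    show "infsum (f k) UNIV = of_nat (N choose k) * s ^ k * t ^ (N - k) * Qk u k"
      unfolding f_def Qk_def by (rule infsum_cmult_right) (use sQ[OF assms, of k] k in auto)
  qed
  finally show ?thesis .
qed

definition "Hf u s t = (1 / p) * (Kf u s t + s ^ N * Bp u + t ^ N * Bm u) + Fp u s + Fm u t"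

lemma Fp_alt: "Fp u s = ((r / q\<^sup>2) * Cp u - Lp u / q) * s powr q - (r / q * Cp u) * (s powr q * ln s)"
  by (simp add: Fp_def algebra_simps)
lemma Fm_alt: "Fm u s = ((r / q\<^sup>2) * Cm u - Lm u / q) * s powr q - (r / q * Cm u) * (s powr q * ln s)"
  by (simp add: Fm_def algebra_simps)

lemma Hf_cont: assumes "u \<in> E_space a b p" "S \<subseteq> {0..} \<times> {0..}"
  shows "continuous_on S (\<lambda>z. Hf u (fst z) (snd z))"
proof -
  define P1 where "P1 z = fst z powr q * ln (fst z)" for z :: "real \<times> real"
  define P2 where "P2 z = snd z powr q * ln (snd z)" for z :: "real \<times> real"
  define R1 where "R1 z = fst z powr q" for z :: "real \<times> real"
  define R2 where "R2 z = snd z powr q" for z :: "real \<times> real"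
  define KS where "KS z = (\<Sum>k\<in>{..N}. of_nat (N choose k) * fst z ^ k * snd z ^ (N - k) * Qk u k)" for z :: "real \<times> real"
  have c1: "continuous_on S P1" unfolding P1_def
    by (rule continuous_on_compose2[OF cont_powr_ln[OF q_pos] continuous_on_fst[OF continuous_on_id]])
       (use assms(2) in auto)
  have c2: "continuous_on S P2" unfolding P2_def
    by (rule continuous_on_compose2[OF cont_powr_ln[OF q_pos] continuous_on_snd[OF continuous_on_id]])
       (use assms(2) in auto)
  have c3: "continuous_on S R1" unfolding R1_def
    by (rule continuous_on_powr'[OF continuous_on_fst[OF continuous_on_id] continuous_on_const])
       (use assms(2) q_pos in auto)
  have c4: "continuous_on S R2" unfolding R2_def
    by (rule continuous_on_powr'[OF continuous_on_snd[OF continuous_on_id] continuous_on_const])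
       (use assms(2) q_pos in auto)
  have c5: "continuous_on S KS" unfolding KS_def
    by (intro continuous_on_sum continuous_on_mult continuous_on_const continuous_on_power
        continuous_on_fst continuous_on_snd continuous_on_id)
  have c6: "continuous_on S (\<lambda>z. (1 / p) * (KS z + fst z ^ N * Bp u + snd z ^ N * Bm u)
      + (((r / q\<^sup>2) * Cp u - Lp u / q) * R1 z - (r / q * Cp u) * P1 z)
      + (((r / q\<^sup>2) * Cm u - Lm u / q) * R2 z - (r / q * Cm u) * P2 z))"
    by (intro continuous_on_add continuous_on_diff continuous_on_mult continuous_on_const continuous_on_power
        continuous_on_fst continuous_on_snd continuous_on_id c1 c2 c3 c4 c5)
  have eq: "Hf u (fst z) (snd z) = (1 / p) * (KS z + fst z ^ N * Bp u + snd z ^ N * Bm u)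
      + (((r / q\<^sup>2) * Cp u - Lp u / q) * R1 z - (r / q * Cp u) * P1 z)
      + (((r / q\<^sup>2) * Cm u - Lm u / q) * R2 z - (r / q * Cm u) * P2 z)" for z
    unfolding Hf_def Kf_binom[OF assms(1)] Fp_alt Fm_alt P1_def P2_def R1_def R2_def KS_def ..
  show ?thesis unfolding eq using c6 .
qed

end

context setting begin

lemma nehari_exists: assumes "u \<in> D" "u \<noteq> (\<lambda>_. 0)"
  shows "\<exists>t0>0. scal t0 u \<in> D \<and> scal t0 u \<noteq> (\<lambda>_. 0) \<and> dI (scal t0 u) (scal t0 u) = 0
     \<and> (\<forall>s\<ge>0. I (scal s u) \<le> I (scal t0 u))"
proof -
  have E: "u \<in> E_space a b p" using assms(1) by (simp add: D_set_def)
  define X where "X = Kf u 1 1 + Bp u + Bm u"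
  define Y where "Y = - (Lp u + Lm u)"
  define Z where "Z = r * (Cp u + Cm u)"
  have BC: "Bp u + Bm u > 0 \<and> Cp u + Cm u > 0"
  proof (cases "posp u \<noteq> (\<lambda>_. 0)")
    case True
    then show ?thesis using BCp_pos[OF E True] Bm_nonneg[of u] Cm_nonneg[of u] by linarith
  next
    case False
    then have "negp u \<noteq> (\<lambda>_. 0)" using nonzero_split[OF assms(2)] by blast
    then show ?thesis using BCm_pos[OF E] Bp_nonneg[of u] Cp_nonneg[of u] by (simp add: add_nonneg_pos)
  qed
  have Xp: "X > 0" using BC Kf_nonneg[of u 1 1] by (simp add: X_def)
  have Zp: "Z > 0" using BC rpos by (simp add: Z_def)
  define g where "g t = X * t ^ N + Y * t powr q - Z * t powr q * ln t" for t
  have gid: "dI (scal t u) (scal t u) = g t" if "t \<ge> 0" for t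
    unfolding scal_W dIself[OF assms(1) that that] Kf_diag[OF E, of t] g_def X_def Y_def Z_def
    by (simp add: algebra_simps)
  obtain e where e: "e > 0" "e \<le> 1" "g e > 0"
    using Phi_small[OF Xp Zp Nq, of Y] unfolding g_def by auto
  obtain R where R: "R \<ge> 1" "\<And>s. s \<ge> R \<Longrightarrow> g s < - 0"
    using Phi_large[OF Zp less_imp_le[OF Nq], where K=0 and X=X and Y=Y] unfolding g_def by auto
  have cont: "continuous_on {e..R} g" unfolding g_def
    using e(1) by (intro continuous_intros) auto
  obtain t0 where t0: "e \<le> t0" "t0 \<le> R" "g t0 = 0"
    using IVT2'[of g R 0 e, OF _ _ _ cont] R e by force
  have t0p: "t0 > 0" using t0 e by simp
  define w where "w = scal t0 u"
  have wD: "w \<in> D" unfolding w_def scal_W using WD[OF assms(1)] t0p by simp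
  have wn: "w \<noteq> (\<lambda>_. 0)"
  proof
    assume h: "w = (\<lambda>_. 0)"
    obtain k where k: "u k \<noteq> 0" using assms(2) by auto
    have "w k = t0 * u k" by (simp add: w_def scal_def)
    then show False using h k t0p by simp
  qed
  have dw: "dI w w = 0" unfolding w_def using gid[of t0] t0 t0p by simp
  have "I (scal s u) \<le> I w" if s: "s \<ge> 0" for s
  proof -
    have "scal s u = scal (s / t0) w" using t0p by (auto simp: w_def scal_def)
    then show ?thesis using nehari_ineq[OF wD dw, of "s / t0"] s t0p by simp
  qed
  then show ?thesis using t0p wD wn dw unfolding w_def by blast
qed

end

context setting begin

lemma Kbound: assumes "u \<in> E_space a b p" "s \<ge> 0" "t \<ge> 0"
  shows "Kf u s t \<le> (s ^ N + t ^ N) * Kf u 1 1"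
proof -
  have pt: "a n * (s * al u n + t * be u n) ^ N \<le> (s ^ N + t ^ N) * (a n * (1 * al u n + 1 * be u n) ^ N)" for n
  proof -
    define m where "m = max s t"
    have m0: "m \<ge> 0" using assms by (simp add: m_def)
    have ab: "\<bar>s * al u n + t * be u n\<bar> \<le> m * \<bar>al u n + be u n\<bar>"
      using al_be_sign'[of u n]
    proof
      assume h: "al u n \<ge> 0 \<and> be u n \<ge> 0"
      have sm: "s \<le> m" "t \<le> m" unfolding m_def by auto
      have "s * al u n \<le> m * al u n" "t * be u n \<le> m * be u n"
        using h by (auto intro!: mult_right_mono sm)
      moreover have "s * al u n \<ge> 0" "t * be u n \<ge> 0" using h assms by auto
      ultimately show ?thesis using h by (simp add: algebra_simps)
    next
      assume h: "al u n \<le> 0 \<and> be u n \<le> 0"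
      have sm: "s \<le> m" "t \<le> m" unfolding m_def by auto
      have "s * (- al u n) \<le> m * (- al u n)" "t * (- be u n) \<le> m * (- be u n)"
        using mult_right_mono[OF sm(1), of "- al u n"] mult_right_mono[OF sm(2), of "- be u n"] h by auto
      moreover have "s * al u n \<le> 0" "t * be u n \<le> 0" using h assms by (auto simp: mult_nonneg_nonpos)
      ultimately show ?thesis using h by (simp add: algebra_simps)
    qed
    have "(s * al u n + t * be u n) ^ N = \<bar>s * al u n + t * be u n\<bar> ^ N" by (rule evpow_abs(2))
    also have "\<dots> \<le> (m * \<bar>al u n + be u n\<bar>) ^ N" using ab by (intro power_mono) auto
    also have "\<dots> = m ^ N * (al u n + be u n) ^ N" by (simp add: power_mult_distrib evpow_abs(2)[of "al u n + be u n"])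
    also have "\<dots> \<le> (s ^ N + t ^ N) * (al u n + be u n) ^ N"
    proof (rule mult_right_mono)
      show "m ^ N \<le> s ^ N + t ^ N" using assms by (auto simp: m_def max_def)
      show "0 \<le> (al u n + be u n) ^ N" using Neven by (simp add: zero_le_even_power)
    qed
    finally have "(s * al u n + t * be u n) ^ N \<le> (s ^ N + t ^ N) * (al u n + be u n) ^ N" .
    then have "a n * (s * al u n + t * be u n) ^ N \<le> a n * ((s ^ N + t ^ N) * (al u n + be u n) ^ N)"
      using apos[of n] by (intro mult_left_mono) auto
    then show ?thesis by (simp add: mult_ac)
  qed
  have "Kf u s t \<le> infsum (\<lambda>n. (s ^ N + t ^ N) * (a n * (1 * al u n + 1 * be u n) ^ N)) UNIV"
    unfolding Kf_def by (rule infsum_mono[OF sK[OF assms(1)] summable_on_cmult_right[OF sK[OF assms(1)]] pt])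
  also have "\<dots> = (s ^ N + t ^ N) * Kf u 1 1" unfolding Kf_def
    by (rule infsum_cmult_right) (rule sK[OF assms(1)])
  finally show ?thesis .
qed

lemma Kmono0s: assumes "u \<in> E_space a b p" "e \<ge> 0" "t \<ge> 0"
  shows "Kf u 0 t \<le> Kf u e t"
  unfolding Kf_def
proof (rule infsum_mono[OF sK[OF assms(1)] sK[OF assms(1)]])
  fix n
  have "\<bar>0 * al u n + t * be u n\<bar> \<le> \<bar>e * al u n + t * be u n\<bar>"
    using al_be_sign'[of u n]
  proof
    assume h: "al u n \<ge> 0 \<and> be u n \<ge> 0"
    then have "e * al u n \<ge> 0" "t * be u n \<ge> 0" using assms by auto
    then show ?thesis by simp
  next
    assume h: "al u n \<le> 0 \<and> be u n \<le> 0"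
    then have "e * al u n \<le> 0" "t * be u n \<le> 0" using assms by (auto simp: mult_nonneg_nonpos)
    then show ?thesis by simp
  qed
  then have "\<bar>0 * al u n + t * be u n\<bar> ^ N \<le> \<bar>e * al u n + t * be u n\<bar> ^ N" by (intro power_mono) auto
  then have "(0 * al u n + t * be u n) ^ N \<le> (e * al u n + t * be u n) ^ N" by (simp only: evpow_abs(2)[symmetric])
  then show "a n * (0 * al u n + t * be u n) ^ N \<le> a n * (e * al u n + t * be u n) ^ N"
    using apos[of n] by (intro mult_left_mono) auto
qed

lemma Kmono0t: assumes "u \<in> E_space a b p" "e \<ge> 0" "s \<ge> 0"
  shows "Kf u s 0 \<le> Kf u s e"
  unfolding Kf_def
proof (rule infsum_mono[OF sK[OF assms(1)] sK[OF assms(1)]])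
  fix n
  have "\<bar>s * al u n + 0 * be u n\<bar> \<le> \<bar>s * al u n + e * be u n\<bar>"
    using al_be_sign'[of u n]
  proof
    assume h: "al u n \<ge> 0 \<and> be u n \<ge> 0"
    then have "s * al u n \<ge> 0" "e * be u n \<ge> 0" using assms by auto
    then show ?thesis by simp
  next
    assume h: "al u n \<le> 0 \<and> be u n \<le> 0"
    then have "s * al u n \<le> 0" "e * be u n \<le> 0" using assms by (auto simp: mult_nonneg_nonpos)
    then show ?thesis by simp
  qed
  then have "\<bar>s * al u n + 0 * be u n\<bar> ^ N \<le> \<bar>s * al u n + e * be u n\<bar> ^ N" by (intro power_mono) auto
  then have "(s * al u n + 0 * be u n) ^ N \<le> (s * al u n + e * be u n) ^ N" by (simp only: evpow_abs(2)[symmetric])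
  then show "a n * (s * al u n + 0 * be u n) ^ N \<le> a n * (s * al u n + e * be u n) ^ N"
    using apos[of n] by (intro mult_left_mono) auto
qed

lemma Ktan_s: assumes "u \<in> E_space a b p"
  shows "Kf u s t0 \<ge> Kf u s0 t0 + real N * (s - s0) * Gp u s0 t0"
proof -
  have eq: "infsum (\<lambda>n. 1 * (a n * (s0 * al u n + t0 * be u n) ^ N) + (real N * (s - s0)) * (a n * (s0 * al u n + t0 * be u n) ^ (N - 1) * al u n)) UNIV
      = 1 * Kf u s0 t0 + (real N * (s - s0)) * Gp u s0 t0"
    unfolding Kf_def Gp_def using infsum_comb2(2)[OF sK[OF assms, of s0 t0] sGp[OF assms, of s0 t0], of "(\<lambda>n. 1 * (a n * (s0 * al u n + t0 * be u n) ^ N) + (real N * (s - s0)) * (a n * (s0 * al u n + t0 * be u n) ^ (N - 1) * al u n))" 1 "real N * (s - s0)"] by simp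
  have sm: "(\<lambda>n. 1 * (a n * (s0 * al u n + t0 * be u n) ^ N) + (real N * (s - s0)) * (a n * (s0 * al u n + t0 * be u n) ^ (N - 1) * al u n)) summable_on UNIV"
    using infsum_comb2(1)[OF sK[OF assms, of s0 t0] sGp[OF assms, of s0 t0], of "(\<lambda>n. 1 * (a n * (s0 * al u n + t0 * be u n) ^ N) + (real N * (s - s0)) * (a n * (s0 * al u n + t0 * be u n) ^ (N - 1) * al u n))" 1 "real N * (s - s0)"] by simp
  have "infsum (\<lambda>n. 1 * (a n * (s0 * al u n + t0 * be u n) ^ N) + (real N * (s - s0)) * (a n * (s0 * al u n + t0 * be u n) ^ (N - 1) * al u n)) UNIV
      \<le> Kf u s t0"
    unfolding Kf_def
  proof (rule infsum_mono[OF sm sK[OF assms]])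
    fix n
    have "(s * al u n + t0 * be u n) ^ N \<ge> (s0 * al u n + t0 * be u n) ^ N
        + real N * (s0 * al u n + t0 * be u n) ^ (N - 1) * ((s * al u n + t0 * be u n) - (s0 * al u n + t0 * be u n))"
      by (rule tangent_even_pow[OF Neven N2])
    then have "a n * (s * al u n + t0 * be u n) ^ N \<ge> a n * ((s0 * al u n + t0 * be u n) ^ N
        + real N * (s0 * al u n + t0 * be u n) ^ (N - 1) * ((s * al u n + t0 * be u n) - (s0 * al u n + t0 * be u n)))"
      using apos[of n] by (intro mult_left_mono) auto
    then show "1 * (a n * (s0 * al u n + t0 * be u n) ^ N) + (real N * (s - s0)) * (a n * (s0 * al u n + t0 * be u n) ^ (N - 1) * al u n)
        \<le> a n * (s * al u n + t0 * be u n) ^ N"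
      by (simp add: algebra_simps)
  qed
  then show ?thesis using eq by simp
qed

lemma Ktan_t: assumes "u \<in> E_space a b p"
  shows "Kf u s0 t \<ge> Kf u s0 t0 + real N * (t - t0) * Gm u s0 t0"
proof -
  have eq: "infsum (\<lambda>n. 1 * (a n * (s0 * al u n + t0 * be u n) ^ N) + (real N * (t - t0)) * (a n * (s0 * al u n + t0 * be u n) ^ (N - 1) * be u n)) UNIV
      = 1 * Kf u s0 t0 + (real N * (t - t0)) * Gm u s0 t0"
    unfolding Kf_def Gm_def using infsum_comb2(2)[OF sK[OF assms, of s0 t0] sGm[OF assms, of s0 t0], of "(\<lambda>n. 1 * (a n * (s0 * al u n + t0 * be u n) ^ N) + (real N * (t - t0)) * (a n * (s0 * al u n + t0 * be u n) ^ (N - 1) * be u n))" 1 "real N * (t - t0)"] by simp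
  have sm: "(\<lambda>n. 1 * (a n * (s0 * al u n + t0 * be u n) ^ N) + (real N * (t - t0)) * (a n * (s0 * al u n + t0 * be u n) ^ (N - 1) * be u n)) summable_on UNIV"
    using infsum_comb2(1)[OF sK[OF assms, of s0 t0] sGm[OF assms, of s0 t0], of "(\<lambda>n. 1 * (a n * (s0 * al u n + t0 * be u n) ^ N) + (real N * (t - t0)) * (a n * (s0 * al u n + t0 * be u n) ^ (N - 1) * be u n))" 1 "real N * (t - t0)"] by simp
  have "infsum (\<lambda>n. 1 * (a n * (s0 * al u n + t0 * be u n) ^ N) + (real N * (t - t0)) * (a n * (s0 * al u n + t0 * be u n) ^ (N - 1) * be u n)) UNIV
      \<le> Kf u s0 t"
    unfolding Kf_def
  proof (rule infsum_mono[OF sm sK[OF assms]])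
    fix n
    have "(s0 * al u n + t * be u n) ^ N \<ge> (s0 * al u n + t0 * be u n) ^ N
        + real N * (s0 * al u n + t0 * be u n) ^ (N - 1) * ((s0 * al u n + t * be u n) - (s0 * al u n + t0 * be u n))"
      by (rule tangent_even_pow[OF Neven N2])
    then have "a n * (s0 * al u n + t * be u n) ^ N \<ge> a n * ((s0 * al u n + t0 * be u n) ^ N
        + real N * (s0 * al u n + t0 * be u n) ^ (N - 1) * ((s0 * al u n + t * be u n) - (s0 * al u n + t0 * be u n)))"
      using apos[of n] by (intro mult_left_mono) auto
    then show "1 * (a n * (s0 * al u n + t0 * be u n) ^ N) + (real N * (t - t0)) * (a n * (s0 * al u n + t0 * be u n) ^ (N - 1) * be u n)
        \<le> a n * (s0 * al u n + t * be u n) ^ N"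
      by (simp add: algebra_simps)
  qed
  then show ?thesis using eq by simp
qed

lemma Kf00: "Kf u 0 0 = 0"
  using N2 by (simp add: Kf_def power_0_left)

lemma Fp0: "Fp u 0 = 0" and Fm0: "Fm u 0 = 0"
  by (simp_all add: Fp_def Fm_def)

lemma Hf_I: "u \<in> D \<Longrightarrow> s \<ge> 0 \<Longrightarrow> t \<ge> 0 \<Longrightarrow> I (W u s t) = Hf u s t"
  by (simp add: Hform Hf_def)

end

context setting begin

lemma fermat_aux:
  fixes G B Y Z s0 :: real
  assumes s0: "s0 > 0"
    and loc: "\<And>y. y > 0 \<Longrightarrow> (y - s0) * G + (1 / p) * (y ^ N * B) + (Y * y powr q - Z * y powr q * ln y)
       \<le> (s0 - s0) * G + (1 / p) * (s0 ^ N * B) + (Y * s0 powr q - Z * s0 powr q * ln s0)"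
  shows "s0 * G + s0 ^ N * B + Y * q * s0 powr q - Z * q * s0 powr q * ln s0 - Z * s0 powr q = 0"
proof -
  define l where "l y = (y - s0) * G + (1 / p) * (y ^ N * B) + (Y * y powr q - Z * y powr q * ln y)" for y
  define L where "L = G + (1 / p) * (real N * s0 ^ (N - 1) * B) + (Y * (q * s0 powr (q - 1)) - Z * (q * s0 powr (q - 1) * ln s0 + s0 powr q * (1 / s0)))"
  have d: "(l has_real_derivative L) (at s0)"
    unfolding l_def L_def using s0 p_pos
    by (auto intro!: derivative_eq_intros simp: field_simps)
  have "L = 0"
  proof (rule DERIV_local_max[OF d s0])
    show "\<forall>y. \<bar>s0 - y\<bar> < s0 \<longrightarrow> l y \<le> l s0"
    proof (intro allI impI)
      fix y assume "\<bar>s0 - y\<bar> < s0"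
      then have "y > 0" by linarith
      then show "l y \<le> l s0" unfolding l_def by (rule loc)
    qed
  qed
  have e1: "s0 powr (q - 1) = s0 powr q / s0" using s0 by (simp add: powr_diff)
  have e2: "s0 ^ (N - 1) = s0 ^ N / s0" using s0 powN1[of s0] by (simp add: field_simps)
  have "s0 * L = s0 * G + s0 ^ N * B + Y * q * s0 powr q - Z * q * s0 powr q * ln s0 - Z * s0 powr q"
    unfolding L_def e1 e2 using s0 N1 by (simp add: pN field_simps)
  then show ?thesis using \<open>L = 0\<close> by simp
qed

end

context setting begin

lemma nodal_exists: assumes u: "u \<in> D" and up: "posp u \<noteq> (\<lambda>_. 0)" and um: "negp u \<noteq> (\<lambda>_. 0)"
  shows "\<exists>s0>0. \<exists>t0>0. (\<forall>s\<ge>0. \<forall>t\<ge>0. I (W u s t) \<le> I (W u s0 t0))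
     \<and> dI (W u s0 t0) (posp (W u s0 t0)) = 0 \<and> dI (W u s0 t0) (negp (W u s0 t0)) = 0"
proof -
  have E: "u \<in> E_space a b p" using u by (simp add: D_set_def)
  have Bp: "Bp u > 0" and Cp: "Cp u > 0" using BCp_pos[OF E up] by auto
  have Bm: "Bm u > 0" and Cm: "Cm u > 0" using BCm_pos[OF E um] by auto
  define K1 where "K1 = Kf u 1 1"
  have K1: "K1 \<ge> 0" using Kf_nonneg by (simp add: K1_def)
  define Yp where "Yp = (r / q\<^sup>2) * Cp u - Lp u / q"
  define Zp where "Zp = r / q * Cp u"
  define Ym where "Ym = (r / q\<^sup>2) * Cm u - Lm u / q"
  define Zm where "Zm = r / q * Cm u"
  have Zp0: "Zp > 0" using Cp rpos q_pos by (simp add: Zp_def)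
  have Zm0: "Zm > 0" using Cm rpos q_pos by (simp add: Zm_def)
  have Fp_eq: "Fp u s = Yp * s powr q - Zp * s powr q * ln s" for s
    by (simp add: Fp_alt Yp_def Zp_def mult.assoc)
  have Fm_eq: "Fm u s = Ym * s powr q - Zm * s powr q * ln s" for s
    by (simp add: Fm_alt Ym_def Zm_def mult.assoc)
  define Pp where "Pp s = ((K1 + Bp u) / p) * s ^ N + Yp * s powr q - Zp * s powr q * ln s" for s
  define Pm where "Pm s = ((K1 + Bm u) / p) * s ^ N + Ym * s powr q - Zm * s powr q * ln s" for s
  have bound: "Hf u s t \<le> Pp s + Pm t" if st: "s \<ge> 0" "t \<ge> 0" for s t
  proof -
    have "(1 / p) * Kf u s t \<le> (1 / p) * ((s ^ N + t ^ N) * K1)"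
      using Kbound[OF E st] p_pos unfolding K1_def by (intro mult_left_mono) auto
    moreover have "Pp s + Pm t - Hf u s t = (1 / p) * ((s ^ N + t ^ N) * K1) - (1 / p) * Kf u s t"
      unfolding Pp_def Pm_def Hf_def Fp_eq Fm_eq using p_pos by (simp add: field_simps)
    ultimately show ?thesis by linarith
  qed
  obtain Mp where Mp: "\<And>s. s \<ge> 0 \<Longrightarrow> Pp s \<le> Mp"
    using Phi_bounded[OF Zp0 Nq N1, where X="(K1 + Bp u) / p" and Y=Yp] unfolding Pp_def by auto
  obtain Mm where Mm: "\<And>s. s \<ge> 0 \<Longrightarrow> Pm s \<le> Mm"
    using Phi_bounded[OF Zm0 Nq N1, where X="(K1 + Bm u) / p" and Y=Ym] unfolding Pm_def by auto
  obtain Rp where Rp: "Rp \<ge> 1" "\<And>s. s \<ge> Rp \<Longrightarrow> Pp s < - Mm"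
    using Phi_large[OF Zp0 less_imp_le[OF Nq], where K=Mm and X="(K1 + Bp u) / p" and Y=Yp] unfolding Pp_def by auto
  obtain Rm where Rm: "Rm \<ge> 1" "\<And>s. s \<ge> Rm \<Longrightarrow> Pm s < - Mp"
    using Phi_large[OF Zm0 less_imp_le[OF Nq], where K=Mp and X="(K1 + Bm u) / p" and Y=Ym] unfolding Pm_def by auto
  define R where "R = max Rp Rm"
  define S where "S = {0..R} \<times> {0..R}"
  have cS: "compact S" unfolding S_def by (intro compact_Times compact_Icc)
  have S0: "(0, 0) \<in> S" using Rp by (simp add: S_def R_def)
  have SS: "S \<subseteq> {0..} \<times> {0..}" by (auto simp: S_def)
  obtain z0 where z0: "z0 \<in> S" "\<And>y. y \<in> S \<Longrightarrow> Hf u (fst y) (snd y) \<le> Hf u (fst z0) (snd z0)"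
    using continuous_attains_sup[OF cS _ Hf_cont[OF E SS]] S0 by blast
  define s0 where "s0 = fst z0"
  define t0 where "t0 = snd z0"
  have s00: "s0 \<ge> 0" and t00: "t0 \<ge> 0" using z0(1) by (auto simp: S_def s0_def t0_def)
  have H00: "Hf u 0 0 = 0" using N2 by (simp add: Hf_def Kf00 Fp0 Fm0 power_0_left)
  have Hz0: "Hf u s0 t0 \<ge> 0" using z0(2)[OF S0] H00 by (simp add: s0_def t0_def)
  have glob: "Hf u s t \<le> Hf u s0 t0" if st: "s \<ge> 0" "t \<ge> 0" for s t
  proof (cases "s \<le> R \<and> t \<le> R")
    case True
    then have "(s, t) \<in> S" using st by (simp add: S_def)
    then show ?thesis using z0(2) by (force simp: s0_def t0_def)
  next
    case False
    then have "s > R \<or> t > R" by auto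
    then have "Pp s + Pm t < 0"
    proof
      assume "s > R" then have "Pp s < - Mm" using Rp(2) by (simp add: R_def)
      then show ?thesis using Mm[OF st(2)] by linarith
    next
      assume "t > R" then have "Pm t < - Mp" using Rm(2) by (simp add: R_def)
      then show ?thesis using Mp[OF st(1)] by linarith
    qed
    then show ?thesis using bound[OF st] Hz0 by linarith
  qed
  have s0p: "s0 > 0"
  proof (rule ccontr)
    assume "\<not> s0 > 0"
    then have s0z: "s0 = 0" using s00 by simp
    have Bp0: "Bp u / p > 0" using Bp p_pos by simp
    obtain e where e: "e > 0" "(Bp u / p) * e ^ N + Yp * e powr q - Zp * e powr q * ln e > 0"
      using Phi_small[OF Bp0 Zp0 Nq, where Y=Yp] by auto
    have "(1 / p) * Kf u 0 t0 \<le> (1 / p) * Kf u e t0"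
      using Kmono0s[OF E less_imp_le[OF e(1)] t00] p_pos by (intro mult_left_mono) auto
    moreover have "Hf u e t0 - Hf u 0 t0 = (1 / p) * Kf u e t0 - (1 / p) * Kf u 0 t0
        + ((Bp u / p) * e ^ N + Yp * e powr q - Zp * e powr q * ln e)"
      unfolding Hf_def Fp_eq using N2 p_pos by (simp add: field_simps power_0_left)
    ultimately have "Hf u e t0 > Hf u 0 t0" using e(2) by linarith
    then have "Hf u e t0 > Hf u s0 t0" using s0z by simp
    then show False using glob[OF less_imp_le[OF e(1)] t00] by linarith
  qed
  have t0p: "t0 > 0"
  proof (rule ccontr)
    assume "\<not> t0 > 0"
    then have t0z: "t0 = 0" using t00 by simp
    have Bm0: "Bm u / p > 0" using Bm p_pos by simp
    obtain e where e: "e > 0" "(Bm u / p) * e ^ N + Ym * e powr q - Zm * e powr q * ln e > 0"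
      using Phi_small[OF Bm0 Zm0 Nq, where Y=Ym] by auto
    have "(1 / p) * Kf u s0 0 \<le> (1 / p) * Kf u s0 e"
      using Kmono0t[OF E less_imp_le[OF e(1)] s00] p_pos by (intro mult_left_mono) auto
    moreover have "Hf u s0 e - Hf u s0 0 = (1 / p) * Kf u s0 e - (1 / p) * Kf u s0 0
        + ((Bm u / p) * e ^ N + Ym * e powr q - Zm * e powr q * ln e)"
      unfolding Hf_def Fm_eq using N2 p_pos by (simp add: field_simps power_0_left)
    ultimately have "Hf u s0 e > Hf u s0 0" using e(2) by linarith
    then have "Hf u s0 e > Hf u s0 t0" using t0z by simp
    then show False using glob[OF s00 less_imp_le[OF e(1)]] by linarith
  qed
  have fs: "s0 * Gp u s0 t0 + s0 ^ N * Bp u + Yp * q * s0 powr q - Zp * q * s0 powr q * ln s0 - Zp * s0 powr q = 0"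
  proof (rule fermat_aux[OF s0p])
    fix y :: real assume y: "y > 0"
    have "(1 / p) * Kf u y t0 \<ge> (1 / p) * (Kf u s0 t0 + real N * (y - s0) * Gp u s0 t0)"
      using Ktan_s[OF E, of s0 t0 y] p_pos by (intro mult_left_mono) auto
    moreover have "(1 / p) * (Kf u s0 t0 + real N * (y - s0) * Gp u s0 t0) = (1 / p) * Kf u s0 t0 + (y - s0) * Gp u s0 t0"
      using p_pos by (simp add: pN field_simps)
    moreover have "Hf u y t0 - Hf u s0 t0 - (((y - s0) * Gp u s0 t0 + (1 / p) * (y ^ N * Bp u) + (Yp * y powr q - Zp * y powr q * ln y))
        - ((s0 - s0) * Gp u s0 t0 + (1 / p) * (s0 ^ N * Bp u) + (Yp * s0 powr q - Zp * s0 powr q * ln s0)))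
        = (1 / p) * Kf u y t0 - (1 / p) * Kf u s0 t0 - (y - s0) * Gp u s0 t0"
      unfolding Hf_def Fp_eq by (simp add: algebra_simps)
    moreover have "Hf u y t0 \<le> Hf u s0 t0" using glob[OF less_imp_le[OF y] t00] .
    ultimately show "(y - s0) * Gp u s0 t0 + (1 / p) * (y ^ N * Bp u) + (Yp * y powr q - Zp * y powr q * ln y)
       \<le> (s0 - s0) * Gp u s0 t0 + (1 / p) * (s0 ^ N * Bp u) + (Yp * s0 powr q - Zp * s0 powr q * ln s0)"
      by linarith
  qed
  have ft: "t0 * Gm u s0 t0 + t0 ^ N * Bm u + Ym * q * t0 powr q - Zm * q * t0 powr q * ln t0 - Zm * t0 powr q = 0"
  proof (rule fermat_aux[OF t0p])
    fix y :: real assume y: "y > 0"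
    have "(1 / p) * Kf u s0 y \<ge> (1 / p) * (Kf u s0 t0 + real N * (y - t0) * Gm u s0 t0)"
      using Ktan_t[OF E, of s0 t0 y] p_pos by (intro mult_left_mono) auto
    moreover have "(1 / p) * (Kf u s0 t0 + real N * (y - t0) * Gm u s0 t0) = (1 / p) * Kf u s0 t0 + (y - t0) * Gm u s0 t0"
      using p_pos by (simp add: pN field_simps)
    moreover have "Hf u s0 y - Hf u s0 t0 - (((y - t0) * Gm u s0 t0 + (1 / p) * (y ^ N * Bm u) + (Ym * y powr q - Zm * y powr q * ln y))
        - ((t0 - t0) * Gm u s0 t0 + (1 / p) * (t0 ^ N * Bm u) + (Ym * t0 powr q - Zm * t0 powr q * ln t0)))
        = (1 / p) * Kf u s0 y - (1 / p) * Kf u s0 t0 - (y - t0) * Gm u s0 t0"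
      unfolding Hf_def Fm_eq by (simp add: algebra_simps)
    moreover have "Hf u s0 y \<le> Hf u s0 t0" using glob[OF s00 less_imp_le[OF y]] .
    ultimately show "(y - t0) * Gm u s0 t0 + (1 / p) * (y ^ N * Bm u) + (Ym * y powr q - Zm * y powr q * ln y)
       \<le> (t0 - t0) * Gm u s0 t0 + (1 / p) * (t0 ^ N * Bm u) + (Ym * t0 powr q - Zm * t0 powr q * ln t0)"
      by linarith
  qed
  have dp: "dI (W u s0 t0) (posp (W u s0 t0)) = 0"
  proof -
    have "dI (W u s0 t0) (posp (W u s0 t0)) = s0 * Gp u s0 t0 + s0 ^ N * Bp u - s0 powr q * (Lp u + r * ln s0 * Cp u)"
      by (rule dIpos[OF u s00 t00])
    also have "\<dots> = s0 * Gp u s0 t0 + s0 ^ N * Bp u + Yp * q * s0 powr q - Zp * q * s0 powr q * ln s0 - Zp * s0 powr q"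
      unfolding Yp_def Zp_def using q_pos by (simp add: field_simps power2_eq_square)
    finally show ?thesis using fs by simp
  qed
  have dm: "dI (W u s0 t0) (negp (W u s0 t0)) = 0"
  proof -
    have "dI (W u s0 t0) (negp (W u s0 t0)) = t0 * Gm u s0 t0 + t0 ^ N * Bm u - t0 powr q * (Lm u + r * ln t0 * Cm u)"
      by (rule dIneg[OF u s00 t00])
    also have "\<dots> = t0 * Gm u s0 t0 + t0 ^ N * Bm u + Ym * q * t0 powr q - Zm * q * t0 powr q * ln t0 - Zm * t0 powr q"
      unfolding Ym_def Zm_def using q_pos by (simp add: field_simps power2_eq_square)
    finally show ?thesis using ft by simp
  qed
  have "\<forall>s\<ge>0. \<forall>t\<ge>0. I (W u s t) \<le> I (W u s0 t0)"
    using glob Hf_I[OF u] s00 t00 by simp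
  then show ?thesis using s0p t0p dp dm by blast
qed

end

context setting begin

lemma sup_scal: assumes "u \<in> D" "t0 \<ge> 0" "\<forall>s\<ge>0. I (scal s u) \<le> I (scal t0 u)"
  shows "(SUP t\<in>{0..}. I (scal t u)) = I (scal t0 u)"
  by (rule cSup_eq_maximum) (use assms in auto)

lemma sup_W: assumes "s0 \<ge> 0" "t0 \<ge> 0" "\<forall>s\<ge>0. \<forall>t\<ge>0. I (W u s t) \<le> I (W u s0 t0)"
  shows "(SUP st\<in>{0..} \<times> {0..}. I (\<lambda>n. fst st * posp u n + snd st * negp u n)) = I (W u s0 t0)"
proof (rule cSup_eq_maximum)
  show "I (W u s0 t0) \<in> (\<lambda>st. I (\<lambda>n. fst st * posp u n + snd st * negp u n)) ` ({0..} \<times> {0..})"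
    using assms(1,2) by (auto simp: W_def image_iff intro!: bexI[of _ "(s0, t0)"])
next
  fix x assume "x \<in> (\<lambda>st. I (\<lambda>n. fst st * posp u n + snd st * negp u n)) ` ({0..} \<times> {0..})"
  then obtain s t where st: "s \<ge> 0" "t \<ge> 0" "x = I (W u s t)" by (auto simp: W_def)
  then show "x \<le> I (W u s0 t0)" using assms(3) by auto
qed

lemma part2: "I ` Nehari a b c p q r = (\<lambda>u. SUP t\<in>{0..}. I (scal t u)) ` {u \<in> D. u \<noteq> (\<lambda>_. 0)}"
proof
  show "I ` Nehari a b c p q r \<subseteq> (\<lambda>u. SUP t\<in>{0..}. I (scal t u)) ` {u \<in> D. u \<noteq> (\<lambda>_. 0)}"
  proof
    fix x assume "x \<in> I ` Nehari a b c p q r"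
    then obtain v where v: "v \<in> D" "v \<noteq> (\<lambda>_. 0)" "dI v v = 0" "x = I v" by (auto simp: Nehari_def)
    have s1: "scal 1 v = v" by (rule ext) (simp add: scal_def)
    have "(SUP t\<in>{0..}. I (scal t v)) = I (scal 1 v)"
      by (rule sup_scal[OF v(1)]) (use nehari_ineq[OF v(1) v(3)] s1 in auto)
    then show "x \<in> (\<lambda>u. SUP t\<in>{0..}. I (scal t u)) ` {u \<in> D. u \<noteq> (\<lambda>_. 0)}"
      using v s1 by (auto intro!: image_eqI[of _ _ v])
  qed
next
  show "(\<lambda>u. SUP t\<in>{0..}. I (scal t u)) ` {u \<in> D. u \<noteq> (\<lambda>_. 0)} \<subseteq> I ` Nehari a b c p q r"
  proof
    fix x assume "x \<in> (\<lambda>u. SUP t\<in>{0..}. I (scal t u)) ` {u \<in> D. u \<noteq> (\<lambda>_. 0)}"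
    then obtain u where u: "u \<in> D" "u \<noteq> (\<lambda>_. 0)" "x = (SUP t\<in>{0..}. I (scal t u))" by auto
    obtain t0 where t0: "t0 > 0" "scal t0 u \<in> D" "scal t0 u \<noteq> (\<lambda>_. 0)" "dI (scal t0 u) (scal t0 u) = 0"
      "\<forall>s\<ge>0. I (scal s u) \<le> I (scal t0 u)"
      using nehari_exists[OF u(1,2)] by blast
    have "x = I (scal t0 u)" using u(3) sup_scal[OF u(1) _ t0(5)] t0(1) by simp
    moreover have "scal t0 u \<in> Nehari a b c p q r" using t0 by (simp add: Nehari_def)
    ultimately show "x \<in> I ` Nehari a b c p q r" by blast
  qed
qed

lemma part4: "I ` NodalNehari a b c p q r = (\<lambda>u. SUP st\<in>{0..} \<times> {0..}. I (\<lambda>n. fst st * posp u n + snd st * negp u n))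
                 ` {u \<in> D. posp u \<noteq> (\<lambda>_. 0) \<and> negp u \<noteq> (\<lambda>_. 0)}"
proof
  show "I ` NodalNehari a b c p q r \<subseteq> (\<lambda>u. SUP st\<in>{0..} \<times> {0..}. I (\<lambda>n. fst st * posp u n + snd st * negp u n))
                 ` {u \<in> D. posp u \<noteq> (\<lambda>_. 0) \<and> negp u \<noteq> (\<lambda>_. 0)}"
  proof
    fix x assume "x \<in> I ` NodalNehari a b c p q r"
    then obtain v where v: "v \<in> D" "posp v \<noteq> (\<lambda>_. 0)" "negp v \<noteq> (\<lambda>_. 0)" "dI v (posp v) = 0" "dI v (negp v) = 0" "x = I v"
      by (auto simp: NodalNehari_def)
    have "(SUP st\<in>{0..} \<times> {0..}. I (\<lambda>n. fst st * posp v n + snd st * negp v n)) = I (W v 1 1)"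
      by (rule sup_W) (use nodal_ineq[OF v(1,4,5)] W11 in auto)
    then show "x \<in> (\<lambda>u. SUP st\<in>{0..} \<times> {0..}. I (\<lambda>n. fst st * posp u n + snd st * negp u n))
                 ` {u \<in> D. posp u \<noteq> (\<lambda>_. 0) \<and> negp u \<noteq> (\<lambda>_. 0)}"
      using v W11 by (auto intro!: image_eqI[of _ _ v])
  qed
next
  show "(\<lambda>u. SUP st\<in>{0..} \<times> {0..}. I (\<lambda>n. fst st * posp u n + snd st * negp u n))
                 ` {u \<in> D. posp u \<noteq> (\<lambda>_. 0) \<and> negp u \<noteq> (\<lambda>_. 0)} \<subseteq> I ` NodalNehari a b c p q r"
  proof
    fix x assume "x \<in> (\<lambda>u. SUP st\<in>{0..} \<times> {0..}. I (\<lambda>n. fst st * posp u n + snd st * negp u n))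
                 ` {u \<in> D. posp u \<noteq> (\<lambda>_. 0) \<and> negp u \<noteq> (\<lambda>_. 0)}"
    then obtain u where u: "u \<in> D" "posp u \<noteq> (\<lambda>_. 0)" "negp u \<noteq> (\<lambda>_. 0)"
      "x = (SUP st\<in>{0..} \<times> {0..}. I (\<lambda>n. fst st * posp u n + snd st * negp u n))" by auto
    obtain s0 t0 where st: "s0 > 0" "t0 > 0" "\<forall>s\<ge>0. \<forall>t\<ge>0. I (W u s t) \<le> I (W u s0 t0)"
      "dI (W u s0 t0) (posp (W u s0 t0)) = 0" "dI (W u s0 t0) (negp (W u s0 t0)) = 0"
      using nodal_exists[OF u(1,2,3)] by blast
    have "x = I (W u s0 t0)" using u(4) sup_W[of s0 t0 u] st by simp
    moreover have "W u s0 t0 \<in> NodalNehari a b c p q r"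
    proof -
      have "W u s0 t0 \<in> D" using WD[OF u(1)] st by simp
      moreover have "posp (W u s0 t0) \<noteq> (\<lambda>_. 0)"
      proof
        assume h: "posp (W u s0 t0) = (\<lambda>_. 0)"
        obtain k where k: "posp u k \<noteq> 0" using u(2) by auto
        have "posp (W u s0 t0) k = s0 * posp u k" using posp_W[of s0 t0 u] st by simp
        then show False using h k st(1) by simp
      qed
      moreover have "negp (W u s0 t0) \<noteq> (\<lambda>_. 0)"
      proof
        assume h: "negp (W u s0 t0) = (\<lambda>_. 0)"
        obtain k where k: "negp u k \<noteq> 0" using u(3) by auto
        have "negp (W u s0 t0) k = t0 * negp u k" using negp_W[of s0 t0 u] st by simp
        then show False using h k st(2) by simp
      qed
      ultimately show ?thesis using st(4,5) by (simp add: NodalNehari_def)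
    qed
    ultimately show "x \<in> I ` NodalNehari a b c p q r" by blast
  qed
qed

end

theorem lemma2p8:
  fixes p q r :: real and a b c :: "int \<Rightarrow> real"
  assumes pq: "1 < p" "p < q"
    and p_even: "\<exists>k::nat. k > 0 \<and> p / 2 = real k"
    and r1: "r \<ge> 1"
    and apos: "\<And>n. a n > 0" and bpos: "\<And>n. b n > 0" and cpos: "\<And>n. c n > 0"
    and C1: "\<exists>b0>0. \<forall>n. b n \<ge> b0" "filterlim b at_top cofinite"
    and C2: "\<exists>c0>0. \<forall>n. c n \<le> c0" "c summable_on UNIV"
  shows "(\<forall>u \<in> D_set a b c p q r. u \<noteq> (\<lambda>_. 0) \<longrightarrow>
            (\<exists>t\<ge>0. \<forall>s\<ge>0. Ifun a b c p q r (scal s u) \<le> Ifun a b c p q r (scal t u)))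
       \<and> Inf (Ifun a b c p q r ` Nehari a b c p q r)
         = Inf ((\<lambda>u. SUP t\<in>{0..}. Ifun a b c p q r (scal t u))
                 ` {u \<in> D_set a b c p q r. u \<noteq> (\<lambda>_. 0)})
       \<and> (\<forall>u \<in> D_set a b c p q r. posp u \<noteq> (\<lambda>_. 0) \<and> negp u \<noteq> (\<lambda>_. 0) \<longrightarrow>
            (\<exists>s\<ge>0. \<exists>t\<ge>0. \<forall>s'\<ge>0. \<forall>t'\<ge>0.
               Ifun a b c p q r (\<lambda>n. s' * posp u n + t' * negp u n)
               \<le> Ifun a b c p q r (\<lambda>n. s * posp u n + t * negp u n)))
       \<and> Inf (Ifun a b c p q r ` NodalNehari a b c p q r)
         = Inf ((\<lambda>u. SUP st\<in>{0..} \<times> {0..}.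
                      Ifun a b c p q r (\<lambda>n. fst st * posp u n + snd st * negp u n))
                 ` {u \<in> D_set a b c p q r. posp u \<noteq> (\<lambda>_. 0) \<and> negp u \<noteq> (\<lambda>_. 0)})"
proof -
  obtain k :: nat where k: "k > 0" "p / 2 = real k" using p_even by blast
  define N where "N = 2 * k"
  have pN: "p = real N" using k by (simp add: N_def)
  interpret setting p q r a b c N
  proof
    show "p = real N" by (rule pN)
    show "even N" by (simp add: N_def)
    show "2 \<le> N" using k by (simp add: N_def)
    show "p < q" by (rule pq(2))
    show "0 < r" using r1 by simp
    show "\<And>n. a n > 0" by (rule apos)
    show "\<And>n. b n > 0" by (rule bpos)
    show "\<And>n. c n > 0" by (rule cpos)
    show "\<exists>b0>0. \<forall>n. b n \<ge> b0" by (rule C1(1))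
    show "c summable_on UNIV" by (rule C2(2))
  qed
  have c1: "\<forall>u \<in> D_set a b c p q r. u \<noteq> (\<lambda>_. 0) \<longrightarrow>
            (\<exists>t\<ge>0. \<forall>s\<ge>0. Ifun a b c p q r (scal s u) \<le> Ifun a b c p q r (scal t u))"
  proof (intro ballI impI)
    fix u assume "u \<in> D_set a b c p q r" "u \<noteq> (\<lambda>_. 0)"
    from nehari_exists[OF this] show "\<exists>t\<ge>0. \<forall>s\<ge>0. Ifun a b c p q r (scal s u) \<le> Ifun a b c p q r (scal t u)"
      by (auto intro: less_imp_le)
  qed
  have c3: "\<forall>u \<in> D_set a b c p q r. posp u \<noteq> (\<lambda>_. 0) \<and> negp u \<noteq> (\<lambda>_. 0) \<longrightarrow>
            (\<exists>s\<ge>0. \<exists>t\<ge>0. \<forall>s'\<ge>0. \<forall>t'\<ge>0.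
               Ifun a b c p q r (\<lambda>n. s' * posp u n + t' * negp u n)
               \<le> Ifun a b c p q r (\<lambda>n. s * posp u n + t * negp u n))"
  proof (intro ballI impI)
    fix u assume u: "u \<in> D_set a b c p q r" "posp u \<noteq> (\<lambda>_. 0) \<and> negp u \<noteq> (\<lambda>_. 0)"
    from nodal_exists[OF u(1)] u(2) obtain s0 t0 where st: "s0 > 0" "t0 > 0"
      "\<forall>s\<ge>0. \<forall>t\<ge>0. Ifun a b c p q r (W u s t) \<le> Ifun a b c p q r (W u s0 t0)" by blast
    then show "\<exists>s\<ge>0. \<exists>t\<ge>0. \<forall>s'\<ge>0. \<forall>t'\<ge>0.
               Ifun a b c p q r (\<lambda>n. s' * posp u n + t' * negp u n)
               \<le> Ifun a b c p q r (\<lambda>n. s * posp u n + t * negp u n)"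
    proof -
      have "s0 \<ge> 0 \<and> t0 \<ge> 0 \<and> (\<forall>s'\<ge>0. \<forall>t'\<ge>0. Ifun a b c p q r (\<lambda>n. s' * posp u n + t' * negp u n)
               \<le> Ifun a b c p q r (\<lambda>n. s0 * posp u n + t0 * negp u n))"
        using st unfolding W_def by auto
      then show ?thesis by blast
    qed
  qed
  show ?thesis using c1 c3 part2 part4 by simp
qed

end
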